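(* Let $B_{\rho} = B_{\rho}(x_0)$ be a ball of ${\bf R}^n$, $\omega \in A_2(K_1)$, $(\nu,\omega) \in B_{2,q}^1(K_2)$ for some $q > 2$, $\nu \in A_{\infty}$, and let $\sigma_1\in(1,q)$ and $\kappa\in(1,\sigma_1]$ be as in the weighted interpolation inequality $\frac{1}{\upsilon (B_{\rho})} \int_A |u|^{2\kappa} \upsilon \, dx \leqslant \gamma_1^{2} \rho^2 \big( \frac{1}{\nu (B_{\rho})} \int_A |u|^{2} \nu \, dx \big)^{\kappa -1} \big( \frac{1}{\omega (B_{\rho})} \int_{B_{\rho}} |D u|^2 \omega \, dx \big)$ ($A\subset B_\rho$, $u$ Lipschitz with support in $B_\rho$ or null mean, $\upsilon\in\{\nu,\omega\}$). Consider moreover $s_1, s_2 \in (0,T)$ and a family of open sets $A(t)$, $t \in (s_1,s_2)$, such that $E = \cup_{t \in (s_1,s_2)} A(t)$ is an open subset of $B_{\rho} \times (s_1, s_2)$. For every $u \in C^0([s_1,s_2]; L^2(B_{\rho},\nu)) \cap L^2(s_1,s_2; W^{1,2}_0(B_{\rho}, \nu, \omega))$ it holds \begin{align*} \frac{1}{\upsilon (B_{\rho})} \iint_{E} |u|^{2\kappa} (x,t) \upsilon (x) \, dx dt \leqslant & \gamma_1^{2} \, \rho^2 \, \left( \frac{1}{\nu (B_{\rho})} \right)^{\kappa-1} \Big( \sup_{s_1 < t < s_2} \int_{A(t)} |u|^{2}(x,t) \nu (x) \, dx \Big)^{\kappa-1} \cdot \\ & \cdot \frac{1}{\omega (B_{\rho})}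 \int_{s_1}^{s_2}\!\! \int_{B_{\rho}} |D u|^2 (x,t) \, \omega (x) \, dx dt \end{align*} where the inequality holds both with $\upsilon = \nu$ and $\upsilon = \omega$.
   Context: A weight is a function $\eta>0$ a.e. with $\eta\in L^1_{\rm loc}({\bf R}^n)$; $\eta(B)=\int_B\eta\,dx$. $\omega \in A_2(K_1)$ means $\big(\frac{1}{|B|}\int_B \omega\big)^{1/2}\big(\frac{1}{|B|}\int_B \omega^{-1}\big)^{1/2}\leqslant K_1$ for every ball $B$; $A_\infty=\bigcup_{p>1}A_p$. $(\nu,\omega)\in B^1_{2,q}(K_2)$ means $\left(\frac{|B_r(\bar{x})|}{|B_\rho(\bar{x})|}\right)^{1/n}\left(\frac{\nu(B_r(\bar{x}))}{\nu(B_\rho(\bar{x}))}\right)^{1/q}\left(\frac{\omega(B_r(\bar{x}))}{\omega(B_\rho(\bar{x}))}\right)^{-1/2}\leqslant K_2$ for concentric balls with $0<r<\rho$. $\gamma_1$ is the constant in the weighted Sobolev–Poincaré inequality $\big[\frac{1}{\nu(B_\rho)}\int_{B_\rho}|u|^q\nu\big]^{1/q}\leqslant\gamma_1\rho\big[\frac{1}{\omega(B_\rho)}\int_{B_\rho}|Du|^2\omega\big]^{1/2}$. $W^{1,2}_0(B_\rho,\nu,\omega)$ is the closure of $C^1_c(B_\rho)$ in $\{u\in L^2(B_\rho,\nu)\cap W^{1,1}_{\rm loc}: D_iu\in L^2(B_\rho,\omega)\}$. *)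

theory Defs
  imports "HOL-Analysis.Analysis"
begin

definition weight :: "('a::euclidean_space \<Rightarrow> real) \<Rightarrow> bool" where
  "weight \<eta> \<longleftrightarrow> (AE x in lebesgue. 0 < \<eta> x) \<and>
     (\<forall>K. compact K \<longrightarrow> \<eta> absolutely_integrable_on K)"

definition wmeas :: "('a::euclidean_space \<Rightarrow> real) \<Rightarrow> 'a set \<Rightarrow> real" where
  "wmeas \<eta> S = integral S \<eta>"

text \<open>Muckenhoupt class A_2(K), as in the paper (with square roots).\<close>
definition A2 :: "real \<Rightarrow> ('a::euclidean_space \<Rightarrow> real) \<Rightarrow> bool" where
  "A2 K \<eta> \<longleftrightarrow> weight \<eta> \<and>
     (\<forall>x r. 0 < r \<longrightarrow>
        (\<lambda>y. 1 / \<eta> y) integrable_on ball x r \<and>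
        sqrt (wmeas \<eta> (ball x r) / measure lebesgue (ball x r)) *
        sqrt (integral (ball x r) (\<lambda>y. 1 / \<eta> y) / measure lebesgue (ball x r)) \<le> K)"

definition Ap :: "real \<Rightarrow> real \<Rightarrow> ('a::euclidean_space \<Rightarrow> real) \<Rightarrow> bool" where
  "Ap p K \<eta> \<longleftrightarrow> weight \<eta> \<and>
     (\<forall>x r. 0 < r \<longrightarrow>
        (\<lambda>y. \<eta> y powr (- 1 / (p - 1))) integrable_on ball x r \<and>
        (wmeas \<eta> (ball x r) / measure lebesgue (ball x r)) *
        (integral (ball x r) (\<lambda>y. \<eta> y powr (- 1 / (p - 1))) / measure lebesgue (ball x r))
            powr (p - 1) \<le> K)"

definition A_infty :: "('a::euclidean_space \<Rightarrow> real) \<Rightarrow> bool" where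
  "A_infty \<eta> \<longleftrightarrow> (\<exists>p K. 1 < p \<and> Ap p K \<eta>)"

definition B12q :: "real \<Rightarrow> real \<Rightarrow> ('a::euclidean_space \<Rightarrow> real) \<Rightarrow> ('a \<Rightarrow> real) \<Rightarrow> bool" where
  "B12q q K \<nu> \<omega> \<longleftrightarrow> weight \<nu> \<and> weight \<omega> \<and>
     (\<forall>x r \<rho>. 0 < r \<and> r < \<rho> \<longrightarrow>
        (measure lebesgue (ball x r) / measure lebesgue (ball x \<rho>)) powr (1 / real DIM('a)) *
        (wmeas \<nu> (ball x r) / wmeas \<nu> (ball x \<rho>)) powr (1 / q) *
        (wmeas \<omega> (ball x r) / wmeas \<omega> (ball x \<rho>)) powr (- 1 / 2) \<le> K)"

definition C1c :: "'a::euclidean_space set \<Rightarrow> ('a \<Rightarrow> real) \<Rightarrow> ('a \<Rightarrow> 'a) \<Rightarrow> bool" where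
  "C1c B \<phi> G \<longleftrightarrow> (\<forall>x. (\<phi> has_derivative (\<lambda>h. G x \<bullet> h)) (at x)) \<and> continuous_on UNIV G \<and>
     compact (closure {x. \<phi> x \<noteq> 0}) \<and> closure {x. \<phi> x \<noteq> 0} \<subseteq> B"

definition L2w :: "'a::euclidean_space set \<Rightarrow> ('a \<Rightarrow> real) \<Rightarrow> ('a \<Rightarrow> real) \<Rightarrow> bool" where
  "L2w B \<eta> u \<longleftrightarrow> u measurable_on B \<and> (\<lambda>x. (u x)\<^sup>2 * \<eta> x) integrable_on B"

definition weak_grad :: "'a::euclidean_space set \<Rightarrow> ('a \<Rightarrow> real) \<Rightarrow> ('a \<Rightarrow> 'a) \<Rightarrow> bool" where
  "weak_grad B u Du \<longleftrightarrow>
     (\<forall>K. compact K \<and> K \<subseteq> B \<longrightarrow> u absolutely_integrable_on K \<and> Du absolutely_integrable_on K) \<and>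
     (\<forall>\<phi> G. C1c B \<phi> G \<longrightarrow>
        (\<forall>i\<in>Basis. integral B (\<lambda>x. u x * (G x \<bullet> i)) = - integral B (\<lambda>x. (Du x \<bullet> i) * \<phi> x)))"

definition W12 :: "'a::euclidean_space set \<Rightarrow> ('a \<Rightarrow> real) \<Rightarrow> ('a \<Rightarrow> real) \<Rightarrow> ('a \<Rightarrow> real) \<Rightarrow> ('a \<Rightarrow> 'a) \<Rightarrow> bool" where
  "W12 B \<nu> \<omega> u Du \<longleftrightarrow> L2w B \<nu> u \<and> weak_grad B u Du \<and> Du measurable_on B \<and>
     (\<lambda>x. (norm (Du x))\<^sup>2 * \<omega> x) integrable_on B"

definition W120 :: "'a::euclidean_space set \<Rightarrow> ('a \<Rightarrow> real) \<Rightarrow> ('a \<Rightarrow> real) \<Rightarrow> ('a \<Rightarrow> real) \<Rightarrow> ('a \<Rightarrow> 'a) \<Rightarrow> bool" where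
  "W120 B \<nu> \<omega> u Du \<longleftrightarrow> W12 B \<nu> \<omega> u Du \<and>
     (\<exists>\<phi> G. (\<forall>k::nat. C1c B (\<phi> k) (G k)) \<and>
        (\<lambda>k. integral B (\<lambda>x. (\<phi> k x - u x)\<^sup>2 * \<nu> x)) \<longlonglongrightarrow> 0 \<and>
        (\<lambda>k. integral B (\<lambda>x. (norm (G k x - Du x))\<^sup>2 * \<omega> x)) \<longlonglongrightarrow> 0)"

definition par_space :: "real \<Rightarrow> real \<Rightarrow> 'a::euclidean_space set \<Rightarrow> ('a \<Rightarrow> real) \<Rightarrow> ('a \<Rightarrow> real)
    \<Rightarrow> ('a \<Rightarrow> real \<Rightarrow> real) \<Rightarrow> ('a \<Rightarrow> real \<Rightarrow> 'a) \<Rightarrow> bool" where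
  "par_space s1 s2 B \<nu> \<omega> u Du \<longleftrightarrow>
     (\<forall>t\<in>{s1..s2}. L2w B \<nu> (\<lambda>x. u x t)) \<and>
     (\<forall>t\<in>{s1..s2}. ((\<lambda>s. integral B (\<lambda>x. (u x s - u x t)\<^sup>2 * \<nu> x)) \<longlongrightarrow> 0) (at t within {s1..s2})) \<and>
     (AE t in lebesgue. t \<in> {s1<..<s2} \<longrightarrow> W120 B \<nu> \<omega> (\<lambda>x. u x t) (\<lambda>x. Du x t)) \<and>
     (\<lambda>(x, t). u x t) measurable_on (B \<times> {s1<..<s2}) \<and>
     (\<lambda>(x, t). Du x t) measurable_on (B \<times> {s1<..<s2}) \<and>
     (\<lambda>(x, t). (norm (Du x t))\<^sup>2 * \<omega> x) integrable_on (B \<times> {s1<..<s2})"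

end

theory Submission
  imports Defs
begin

lemma nn_henstock:
  fixes f :: "'b::euclidean_space \<Rightarrow> real"
  assumes f: "f integrable_on S" and S: "S \<in> sets lebesgue"
    and nn: "AE x in lebesgue. x \<in> S \<longrightarrow> 0 \<le> f x"
  shows "(\<integral>\<^sup>+x. ennreal (indicator S x * f x) \<partial>lebesgue) = ennreal (integral S f)"
proof -
  obtain N where N: "N \<in> null_sets lebesgue" "\<And>x. x \<notin> N \<Longrightarrow> x \<in> S \<Longrightarrow> 0 \<le> f x"
    using AE_E3[OF nn] by auto
  have negN: "negligible N" using N by (simp add: negligible_iff_null_sets)
  have "(\<lambda>x. norm (f x)) integrable_on S"
    by (rule integrable_spike[OF f negN]) (use N in auto)
  then have ai: "f absolutely_integrable_on S"
    using f absolutely_integrable_on_def by blast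
  then have int: "integrable lebesgue (\<lambda>x. indicator S x *\<^sub>R f x)"
    by (simp add: set_integrable_def)
  have eq: "(LINT x:S | lebesgue. f x) = integral S f"
    using set_lebesgue_integral_eq_integral(2)[OF ai] .
  have "(\<integral>\<^sup>+x. ennreal (indicator S x *\<^sub>R f x) \<partial>lebesgue) = ennreal (\<integral>x. indicator S x *\<^sub>R f x \<partial>lebesgue)"
    by (rule nn_integral_eq_integral[OF int]) (use nn in \<open>auto simp: indicator_def\<close>)
  then show ?thesis using eq by (simp add: set_lebesgue_integral_def)
qed

lemma henstock_from_nn:
  fixes f :: "'b::euclidean_space \<Rightarrow> real"
  assumes f: "f \<in> borel_measurable (lebesgue_on S)" and S: "S \<in> sets lebesgue"
    and nn: "AE x in lebesgue. x \<in> S \<longrightarrow> 0 \<le> f x"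
    and fin: "(\<integral>\<^sup>+x. ennreal (indicator S x * f x) \<partial>lebesgue) < \<infinity>"
  shows "f integrable_on S"
proof -
  have m: "(\<lambda>x. if x \<in> S then f x else 0) \<in> borel_measurable lebesgue"
    using borel_measurable_if_I[OF f S] .
  have "integrable lebesgue (\<lambda>x. if x \<in> S then f x else 0)"
  proof (rule integrableI_bounded[OF m])
    have "(\<integral>\<^sup>+x. ennreal (norm (if x \<in> S then f x else 0)) \<partial>lebesgue)
        = (\<integral>\<^sup>+x. ennreal (indicator S x * f x) \<partial>lebesgue)"
      by (rule nn_integral_cong_AE) (use nn in \<open>auto simp: indicator_def\<close>)
    then show "(\<integral>\<^sup>+x. ennreal (norm (if x \<in> S then f x else 0)) \<partial>lebesgue) < \<infinity>"
      using fin by simp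
  qed
  then have "(\<lambda>x. if x \<in> S then f x else 0) integrable_on UNIV"
    by (rule integrable_on_lebesgue)
  then show ?thesis by (simp add: integrable_restrict_UNIV)
qed

lemma sq_diff_bound:
  fixes a b :: "'b::real_normed_vector" and d w :: real
  assumes d: "0 < d" and w: "0 \<le> w"
  shows "\<bar>(norm a)\<^sup>2 * w - (norm b)\<^sup>2 * w\<bar> \<le> (1 + 1/d) * ((norm (a - b))\<^sup>2 * w) + d * ((norm b)\<^sup>2 * w)"
proof -
  let ?x = "norm (a - b)" and ?y = "norm b"
  have t: "\<bar>norm a - norm b\<bar> \<le> ?x" by (rule norm_triangle_ineq3)
  have s: "norm a + norm b \<le> ?x + 2 * ?y"
    using norm_triangle_ineq[of "a - b" b] by simp
  have "(norm a)\<^sup>2 - (norm b)\<^sup>2 = (norm a - norm b) * (norm a + norm b)"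
    by (simp add: power2_eq_square algebra_simps)
  then have "\<bar>(norm a)\<^sup>2 - (norm b)\<^sup>2\<bar> = \<bar>norm a - norm b\<bar> * (norm a + norm b)"
    by (simp add: abs_mult)
  also have "\<dots> \<le> ?x * (?x + 2 * ?y)"
    by (intro mult_mono t s) auto
  also have "\<dots> = ?x\<^sup>2 + 2 * ?x * ?y" by (simp add: power2_eq_square algebra_simps)
  also have "2 * ?x * ?y \<le> ?x\<^sup>2 / d + d * ?y\<^sup>2"
  proof -
    have "0 \<le> (?x - d * ?y)\<^sup>2 / d" using d by simp
    also have "\<dots> = ?x\<^sup>2 / d - 2 * ?x * ?y + d * ?y\<^sup>2"
      using d by (simp add: power2_eq_square field_simps)
    finally show ?thesis by simp
  qed
  finally have "\<bar>(norm a)\<^sup>2 - (norm b)\<^sup>2\<bar> \<le> (1 + 1/d) * ?x\<^sup>2 + d * ?y\<^sup>2"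
    by (simp add: field_simps)
  then have "\<bar>(norm a)\<^sup>2 - (norm b)\<^sup>2\<bar> * w \<le> ((1 + 1/d) * ?x\<^sup>2 + d * ?y\<^sup>2) * w"
    using w by (rule mult_right_mono)
  moreover have "\<bar>(norm a)\<^sup>2 * w - (norm b)\<^sup>2 * w\<bar> = \<bar>(norm a)\<^sup>2 - (norm b)\<^sup>2\<bar> * w"
    using w by (simp add: abs_mult flip: left_diff_distrib)
  moreover have "((1 + 1/d) * ?x\<^sup>2 + d * ?y\<^sup>2) * w = (1 + 1/d) * (?x\<^sup>2 * w) + d * (?y\<^sup>2 * w)"
    by (simp add: algebra_simps)
  ultimately show ?thesis by linarith
qed

lemma L2conv:
  fixes f :: "nat \<Rightarrow> 'x \<Rightarrow> 'b::real_normed_vector"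
  assumes w: "AE x in M. 0 \<le> w x"
    and ig: "integrable M (\<lambda>x. (norm (g x))\<^sup>2 * w x)"
    and idf: "\<And>k. integrable M (\<lambda>x. (norm (f k x - g x))\<^sup>2 * w x)"
    and iff: "\<And>k. integrable M (\<lambda>x. (norm (f k x))\<^sup>2 * w x)"
    and lim: "(\<lambda>k. \<integral>x. (norm (f k x - g x))\<^sup>2 * w x \<partial>M) \<longlonglongrightarrow> 0"
  shows "(\<lambda>k. \<integral>x. (norm (f k x))\<^sup>2 * w x \<partial>M) \<longlonglongrightarrow> (\<integral>x. (norm (g x))\<^sup>2 * w x \<partial>M)"
proof (rule LIMSEQ_I)
  fix e :: real assume e: "0 < e"
  define Cg where "Cg = (\<integral>x. (norm (g x))\<^sup>2 * w x \<partial>M)"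
  have Cg: "0 \<le> Cg" unfolding Cg_def
    by (rule integral_nonneg_AE) (use w in \<open>auto\<close>)
  define d where "d = e / (2 * (Cg + 1))"
  have d: "0 < d" using e Cg by (simp add: d_def)
  have dC: "d * Cg < e / 2"
  proof -
    have "d * Cg = e * Cg / (2 * (Cg + 1))" by (simp add: d_def)
    also have "\<dots> < e / 2" using e Cg by (simp add: field_simps)
    finally show ?thesis .
  qed
  define e2 where "e2 = e / (2 * (1 + 1/d))"
  have e2: "0 < e2" using e d by (simp add: e2_def add_pos_pos)
  obtain N where N: "\<And>k. k \<ge> N \<Longrightarrow> norm ((\<integral>x. (norm (f k x - g x))\<^sup>2 * w x \<partial>M) - 0) < e2"
    using LIMSEQ_D[OF lim e2] by blast
  show "\<exists>N. \<forall>k\<ge>N. norm ((\<integral>x. (norm (f k x))\<^sup>2 * w x \<partial>M) - (\<integral>x. (norm (g x))\<^sup>2 * w x \<partial>M)) < e"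
  proof (intro exI allI impI)
    fix k assume k: "N \<le> k"
    define D where "D = (\<integral>x. (norm (f k x - g x))\<^sup>2 * w x \<partial>M)"
    have D: "D < e2" using N[OF k] by (simp add: D_def)
    have "norm ((\<integral>x. (norm (f k x))\<^sup>2 * w x \<partial>M) - (\<integral>x. (norm (g x))\<^sup>2 * w x \<partial>M))
        = \<bar>\<integral>x. (norm (f k x))\<^sup>2 * w x - (norm (g x))\<^sup>2 * w x \<partial>M\<bar>"
      using iff ig by simp
    also have "\<dots> \<le> (\<integral>x. \<bar>(norm (f k x))\<^sup>2 * w x - (norm (g x))\<^sup>2 * w x\<bar> \<partial>M)"
      by (rule integral_abs_bound)
    also have "\<dots> \<le> (\<integral>x. (1 + 1/d) * ((norm (f k x - g x))\<^sup>2 * w x) + d * ((norm (g x))\<^sup>2 * w x) \<partial>M)"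
    proof (rule integral_mono_AE)
      show "AE x in M. \<bar>(norm (f k x))\<^sup>2 * w x - (norm (g x))\<^sup>2 * w x\<bar> \<le> (1 + 1/d) * ((norm (f k x - g x))\<^sup>2 * w x) + d * ((norm (g x))\<^sup>2 * w x)"
        using w by eventually_elim (rule sq_diff_bound[OF d])
    qed (use iff ig idf in auto)
    also have "\<dots> = (1 + 1/d) * D + d * Cg"
      using idf ig by (simp add: D_def Cg_def)
    also have "\<dots> < e"
    proof -
      have "(1 + 1/d) * D < (1 + 1/d) * e2"
        using D d by (intro mult_strict_left_mono) (auto intro: add_pos_pos)
      also have "\<dots> = e / 2"
      proof -
        have "0 < 1/d" using d by simp
        then have p: "(1 + 1/d) \<noteq> 0" by linarith
        show ?thesis unfolding e2_def using p by (simp add: field_simps)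
      qed
      finally have "(1 + 1/d) * D < e / 2" .
      then show ?thesis using dC by linarith
    qed
    finally show "norm ((\<integral>x. (norm (f k x))\<^sup>2 * w x \<partial>M) - (\<integral>x. (norm (g x))\<^sup>2 * w x \<partial>M)) < e" .
  qed
qed

lemma C1c_props:
  fixes \<phi> :: "'a::euclidean_space \<Rightarrow> real"
  assumes c: "C1c B \<phi> G"
  shows "\<exists>M. 0 \<le> M \<and> (\<forall>x. norm (G x) \<le> M)" "\<exists>C. C-lipschitz_on UNIV \<phi>"
    "\<exists>M. \<forall>x. \<bar>\<phi> x\<bar> \<le> M"
proof -
  define K where "K = closure {x. \<phi> x \<noteq> 0}"
  have der: "\<And>x. (\<phi> has_derivative (\<lambda>h. G x \<bullet> h)) (at x)" and cG: "continuous_on UNIV G"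
    and K: "compact K" "K \<subseteq> B" using c by (auto simp: C1c_def K_def)
  have out: "G x = 0" if "x \<notin> K" for x
  proof -
    have "((\<lambda>_. 0::real) has_derivative (\<lambda>h. 0)) (at x)" by simp
    then have "(\<phi> has_derivative (\<lambda>h. 0)) (at x)"
    proof (rule has_derivative_transform_within_open)
      show "open (- K)" unfolding K_def by (simp add: open_Compl)
      show "x \<in> - K" using that by simp
      show "\<And>y. y \<in> - K \<Longrightarrow> 0 = \<phi> y" by (auto simp: K_def intro: closure_subset[THEN subsetD])
    qed
    from has_derivative_unique[OF der[of x] this] have "(\<lambda>h. G x \<bullet> h) = (\<lambda>h. 0)" .
    then have "G x \<bullet> G x = 0" by metis
    then show ?thesis by simp
  qed
  have "compact (G ` K)" using K cG by (auto intro: compact_continuous_image continuous_on_subset)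
  then obtain M0 where M0: "\<And>y. y \<in> G ` K \<Longrightarrow> norm y \<le> M0"
    using compact_imp_bounded bounded_iff by metis
  define M where "M = max M0 0"
  have bd: "\<And>x. norm (G x) \<le> M"
    using M0 out unfolding M_def by (metis image_eqI max.coboundedI1 max.cobounded2 norm_zero)
  show "\<exists>M. 0 \<le> M \<and> (\<forall>x. norm (G x) \<le> M)" using bd by (intro exI[of _ M]) (auto simp: M_def)
  have lip: "M-lipschitz_on UNIV \<phi>"
  proof (rule lipschitz_onI)
    fix x y :: 'a
    have "norm (\<phi> x - \<phi> y) \<le> M * norm (x - y)"
    proof (rule differentiable_bound[of UNIV])
      show "\<And>x. x \<in> UNIV \<Longrightarrow> (\<phi> has_derivative (\<lambda>h. G x \<bullet> h)) (at x within UNIV)" using der by simp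
      show "onorm (\<lambda>h. G x \<bullet> h) \<le> M" for x
      proof (rule onorm_bound)
        show "0 \<le> M" by (simp add: M_def)
        fix h :: 'a
        have "norm (G x \<bullet> h) \<le> norm (G x) * norm h" by (simp add: Cauchy_Schwarz_ineq2)
        also have "\<dots> \<le> M * norm h" by (rule mult_right_mono[OF bd]) simp
        finally show "norm (G x \<bullet> h) \<le> M * norm h" .
      qed
    qed auto
    then show "dist (\<phi> x) (\<phi> y) \<le> M * dist x y" by (simp add: dist_norm)
  qed (simp add: M_def)
  then show "\<exists>C. C-lipschitz_on UNIV \<phi>" by blast
  have "continuous_on UNIV \<phi>" using der by (meson has_derivative_continuous continuous_at_imp_continuous_on)
  then have "compact (\<phi> ` K)" using K by (auto intro: compact_continuous_image continuous_on_subset)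
  then obtain M1 where M1: "\<And>y. y \<in> \<phi> ` K \<Longrightarrow> norm y \<le> M1"
    using compact_imp_bounded bounded_iff by metis
  have "\<bar>\<phi> x\<bar> \<le> max M1 0" for x
  proof (cases "x \<in> K")
    case True then show ?thesis using M1[of "\<phi> x"] by auto
  next
    case False then have "\<phi> x = 0" by (auto simp: K_def intro: closure_subset[THEN subsetD])
    then show ?thesis by simp
  qed
  then show "\<exists>M. \<forall>x. \<bar>\<phi> x\<bar> \<le> M" by blast
qed

lemma ae_fst:
  assumes "AE x in (lebesgue :: 'a::euclidean_space measure). P x"
  shows "AE z in (lebesgue :: ('a \<times> real) measure). P (fst z)"
proof -
  have "AE x in (lborel :: 'a measure). P x" using assms by (simp add: AE_completion_iff)
  then obtain N where N: "N \<in> null_sets (lborel :: 'a measure)" "\<And>x. x \<notin> N \<Longrightarrow> P x"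
    using AE_E3 by (metis space_borel space_lborel UNIV_I DiffI)
  have "N \<times> UNIV \<in> null_sets (lborel \<Otimes>\<^sub>M (lborel :: real measure))"
    by (rule lborel.times_in_null_sets1) (use N in auto)
  then have "N \<times> (UNIV::real set) \<in> null_sets (lborel :: ('a \<times> real) measure)"
    by (simp add: lborel_prod)
  then have "AE z in (lborel :: ('a \<times> real) measure). z \<notin> N \<times> UNIV"
    by (rule AE_not_in)
  then have "AE z in (lborel :: ('a \<times> real) measure). P (fst z)"
    by eventually_elim (use N in \<open>auto simp: mem_Times_iff\<close>)
  then show ?thesis by (rule AE_completion)
qed

lemma meas_fst:
  fixes f :: "'a::euclidean_space \<Rightarrow> real"
  assumes f: "f \<in> borel_measurable lebesgue"
  shows "(\<lambda>z. f (fst z)) \<in> borel_measurable (lebesgue :: ('a \<times> real) measure)"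
proof -
  obtain g where g: "g \<in> borel_measurable lborel" "AE x in lborel. f x = g x"
    using completion_ex_borel_measurable_real[OF f] by blast
  have "AE x in lebesgue. f x = g x" using g(2) by (rule AE_completion)
  then have ae: "AE z in (lebesgue :: ('a \<times> real) measure). g (fst z) = f (fst z)"
    by (rule ae_fst[where P="\<lambda>x. g x = f x", OF eventually_mono]) auto
  have "g \<in> borel_measurable borel" using g(1) by simp
  then have "(\<lambda>z. g (fst z)) \<in> borel_measurable (borel :: ('a \<times> real) measure)"
    by (simp add: borel_prod[symmetric])
  then have "(\<lambda>z. g (fst z)) \<in> borel_measurable (lebesgue :: ('a \<times> real) measure)"
    by (metis lborel_def measurable_completion measurable_lborel1 sets_lborel measurable_cong_sets)
  then show ?thesis using ae by (rule borel_measurable_AE)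
qed

lemma wmeas_pos:
  fixes \<eta> :: "'a::euclidean_space \<Rightarrow> real"
  assumes w: "weight \<eta>" and r: "0 < r"
  shows "0 < wmeas \<eta> (ball x r)" "\<eta> absolutely_integrable_on ball x r"
proof -
  have "\<eta> absolutely_integrable_on cball x r" using w by (auto simp: weight_def)
  then show ai: "\<eta> absolutely_integrable_on ball x r"
    by (rule set_integrable_subset) auto
  have nn: "AE y in lebesgue. y \<in> ball x r \<longrightarrow> 0 \<le> \<eta> y"
    using w unfolding weight_def by (auto elim: eventually_mono)
  have int: "\<eta> integrable_on ball x r" using ai by (simp add: absolutely_integrable_on_def)
  have eq: "(\<integral>\<^sup>+y. ennreal (indicator (ball x r) y * \<eta> y) \<partial>lebesgue) = ennreal (wmeas \<eta> (ball x r))"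
    unfolding wmeas_def by (rule nn_henstock[OF int _ nn]) simp
  show "0 < wmeas \<eta> (ball x r)"
  proof (rule ccontr)
    assume "\<not> 0 < wmeas \<eta> (ball x r)"
    then have "(\<integral>\<^sup>+y. ennreal (indicator (ball x r) y * \<eta> y) \<partial>lebesgue) = 0"
      using eq by (simp add: ennreal_eq_0_iff)
    moreover have "(\<lambda>y. ennreal (indicator (ball x r) y * \<eta> y)) \<in> borel_measurable lebesgue"
    proof -
      have "\<eta> \<in> borel_measurable (lebesgue_on (ball x r))"
        using ai by (simp add: absolutely_integrable_measurable)
      from borel_measurable_if_I[OF this] have "(\<lambda>y. if y \<in> ball x r then \<eta> y else 0) \<in> borel_measurable lebesgue"
        by simp
      moreover have "(\<lambda>y. if y \<in> ball x r then \<eta> y else 0) = (\<lambda>y. indicator (ball x r) y * \<eta> y)"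
        by (auto simp: indicator_def)
      ultimately show ?thesis by simp
    qed
    ultimately have "AE y in lebesgue. ennreal (indicator (ball x r) y * \<eta> y) = 0"
      by (simp add: nn_integral_0_iff_AE)
    moreover have "AE y in lebesgue. 0 < \<eta> y" using w by (simp add: weight_def)
    ultimately have "AE y in lebesgue. y \<notin> ball x r"
      by eventually_elim (auto simp: indicator_def ennreal_eq_0_iff)
    then have "ball x r \<in> null_sets lebesgue" by (subst AE_iff_null_sets) auto
    then have "negligible (ball x r)" by (simp add: negligible_iff_null_sets)
    moreover have "\<not> negligible (ball x r)" using r by (intro open_not_negligible) auto
    ultimately show False by simp
  qed
qed

lemma ai_iff:
  fixes f :: "'b::euclidean_space \<Rightarrow> 'c::euclidean_space"
  assumes "B \<in> sets lebesgue"
  shows "f absolutely_integrable_on B \<longleftrightarrow> integrable (lebesgue_on B) f"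
  using assms by (simp add: set_integrable_def integrable_restrict_space)

lemma ae_on:
  assumes "AE x in lebesgue. P x" "B \<in> sets lebesgue"
  shows "AE x in lebesgue_on B. P x"
  using assms by (subst AE_restrict_space_iff) (auto elim: eventually_mono)

lemma integral_nonneg_AE_h:
  fixes f :: "'b::euclidean_space \<Rightarrow> real"
  assumes "AE x in lebesgue. x \<in> S \<longrightarrow> 0 \<le> f x"
  shows "0 \<le> integral S f"
proof -
  obtain N where N: "N \<in> null_sets lebesgue" "\<And>x. x \<notin> N \<Longrightarrow> x \<in> S \<Longrightarrow> 0 \<le> f x"
    using AE_E3[OF assms] by auto
  have neg: "negligible N" using N by (simp add: negligible_iff_null_sets)
  have "integral S f = integral S (\<lambda>x. max 0 (f x))"
    by (rule integral_spike[OF neg]) (use N in auto)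
  also have "0 \<le> \<dots>"
    by (cases "(\<lambda>x. max 0 (f x)) integrable_on S") (auto intro: integral_nonneg simp: not_integrable_integral)
  finally show ?thesis .
qed

lemma ai_nonneg:
  fixes f :: "'b::euclidean_space \<Rightarrow> real"
  assumes f: "f integrable_on S" and nn: "AE x in lebesgue. x \<in> S \<longrightarrow> 0 \<le> f x"
  shows "f absolutely_integrable_on S"
proof -
  obtain N where N: "N \<in> null_sets lebesgue" "\<And>x. x \<notin> N \<Longrightarrow> x \<in> S \<Longrightarrow> 0 \<le> f x"
    using AE_E3[OF nn] by auto
  have negN: "negligible N" using N by (simp add: negligible_iff_null_sets)
  have "(\<lambda>x. norm (f x)) integrable_on S"
    by (rule integrable_spike[OF f negN]) (use N in auto)
  then show ?thesis using f absolutely_integrable_on_def by blast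
qed

lemma integral_on_B_eq:
  fixes h :: "'b::euclidean_space \<Rightarrow> real"
  assumes "integrable (lebesgue_on B) h" "B \<in> sets lebesgue"
  shows "(\<integral>x. h x \<partial>lebesgue_on B) = integral B h"
  using lebesgue_integral_eq_integral[OF assms] .

lemma integral_ind_eq:
  fixes h :: "'b::euclidean_space \<Rightarrow> real"
  assumes "S \<subseteq> B"
  shows "integral B (\<lambda>x. indicator S x * h x) = integral S h"
proof -
  have "integral B (\<lambda>x. indicator S x * h x) = integral B (\<lambda>x. if x \<in> S then h x else 0)"
    by (rule integral_cong) (auto simp: indicator_def)
  also have "\<dots> = integral (S \<inter> B) h" by (rule integral_restrict_Int)
  finally show ?thesis using assms by (simp add: Int_absorb2)
qed

lemma meas_ind:
  fixes h :: "'b::euclidean_space \<Rightarrow> real"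
  assumes "h \<in> borel_measurable (lebesgue_on S)" "S \<in> sets lebesgue"
  shows "(\<lambda>x. ennreal (indicator S x * h x)) \<in> borel_measurable lebesgue"
proof -
  have "(\<lambda>x. if x \<in> S then h x else 0) \<in> borel_measurable lebesgue"
    by (rule borel_measurable_if_I[OF assms])
  moreover have "(\<lambda>x. if x \<in> S then h x else 0) = (\<lambda>x. indicator S x * h x)"
    by (auto simp: indicator_def)
  ultimately show ?thesis by simp
qed

lemma slice:
  fixes x0 :: "'a::euclidean_space" and \<rho> \<kappa> \<gamma>1 :: real
    and \<nu> \<omega> \<upsilon> v :: "'a \<Rightarrow> real" and Dv :: "'a \<Rightarrow> 'a"
  defines "B \<equiv> ball x0 \<rho>"
  assumes rho: "0 < \<rho>" and kappa: "1 < \<kappa>"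
    and wn: "weight \<nu>" and ww: "weight \<omega>" and wu: "weight \<upsilon>"
    and hyp: "\<forall>S f G.
         S \<in> sets lebesgue \<and> S \<subseteq> B \<and>
         (\<exists>C. C-lipschitz_on UNIV f) \<and> closure {x. f x \<noteq> 0} \<subseteq> B \<and>
         (AE x in lebesgue. (f has_derivative (\<lambda>h. G x \<bullet> h)) (at x))
         \<longrightarrow> (1 / wmeas \<upsilon> B) * integral S (\<lambda>x. \<bar>f x\<bar> powr (2 * \<kappa>) * \<upsilon> x)
             \<le> \<gamma>1\<^sup>2 * \<rho>\<^sup>2 *
               ((1 / wmeas \<nu> B) * integral S (\<lambda>x. (f x)\<^sup>2 * \<nu> x)) powr (\<kappa> - 1) *
               ((1 / wmeas \<omega> B) * integral B (\<lambda>x. (norm (G x))\<^sup>2 * \<omega> x))"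
    and W: "W120 B \<nu> \<omega> v Dv" and S: "S \<in> sets lebesgue" "S \<subseteq> B"
  shows "(\<integral>\<^sup>+x. ennreal (indicator S x * (\<bar>v x\<bar> powr (2 * \<kappa>) * \<upsilon> x)) \<partial>lebesgue)
     \<le> ennreal (wmeas \<upsilon> B * (\<gamma>1\<^sup>2 * \<rho>\<^sup>2 *
           ((1 / wmeas \<nu> B) * integral S (\<lambda>x. (v x)\<^sup>2 * \<nu> x)) powr (\<kappa> - 1) *
           ((1 / wmeas \<omega> B) * integral B (\<lambda>x. (norm (Dv x))\<^sup>2 * \<omega> x))))"
proof -
  obtain \<phi> G where C: "\<And>k. C1c B (\<phi> k) (G k)"
    and L1: "(\<lambda>k. integral B (\<lambda>x. (\<phi> k x - v x)\<^sup>2 * \<nu> x)) \<longlonglongrightarrow> 0"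
    and L2: "(\<lambda>k. integral B (\<lambda>x. (norm (G k x - Dv x))\<^sup>2 * \<omega> x)) \<longlonglongrightarrow> 0"
    using W unfolding W120_def by blast
  have vm: "v measurable_on B" and vi: "(\<lambda>x. (v x)\<^sup>2 * \<nu> x) integrable_on B"
    and Dvm: "Dv measurable_on B" and Dvi: "(\<lambda>x. (norm (Dv x))\<^sup>2 * \<omega> x) integrable_on B"
    using W unfolding W120_def W12_def L2w_def by auto
  have Bl: "B \<in> sets lebesgue" by (simp add: B_def)
  have SB: "S \<in> sets (lebesgue_on B)" using S Bl by (simp add: sets_restrict_space_iff)
  have cu: "0 < wmeas \<upsilon> B" and ui: "\<upsilon> absolutely_integrable_on B" using wmeas_pos[OF wu rho] by (auto simp: B_def)
  have cn: "0 < wmeas \<nu> B" and ni: "\<nu> absolutely_integrable_on B" using wmeas_pos[OF wn rho] by (auto simp: B_def)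
  have cw: "0 < wmeas \<omega> B" and wi: "\<omega> absolutely_integrable_on B" using wmeas_pos[OF ww rho] by (auto simp: B_def)
  have nm: "\<nu> \<in> borel_measurable (lebesgue_on B)" using ni Bl by (simp add: absolutely_integrable_measurable)
  have wm: "\<omega> \<in> borel_measurable (lebesgue_on B)" using wi Bl by (simp add: absolutely_integrable_measurable)
  have nI: "integrable (lebesgue_on B) \<nu>" using ni Bl by (simp add: ai_iff)
  have wI: "integrable (lebesgue_on B) \<omega>" using wi Bl by (simp add: ai_iff)
  have nnL: "AE x in lebesgue. 0 \<le> \<nu> x" and wwL: "AE x in lebesgue. 0 \<le> \<omega> x" and uuL: "AE x in lebesgue. 0 \<le> \<upsilon> x"
    and npL: "AE x in lebesgue. 0 < \<nu> x"
    using wn ww wu unfolding weight_def by (auto elim: eventually_mono)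
  have nn: "AE x in lebesgue_on B. 0 \<le> \<nu> x" using ae_on[OF nnL Bl] .
  have wwn: "AE x in lebesgue_on B. 0 \<le> \<omega> x" using ae_on[OF wwL Bl] .
  have vM: "v \<in> borel_measurable (lebesgue_on B)" using vm Bl by (simp add: measurable_on_iff_borel_measurable)
  have DvM: "Dv \<in> borel_measurable (lebesgue_on B)" using Dvm Bl by (simp add: measurable_on_iff_borel_measurable)
  have phic: "continuous_on UNIV (\<phi> k)" for k
    using C[of k] unfolding C1c_def by (meson has_derivative_continuous continuous_at_imp_continuous_on)
  have Gc: "continuous_on UNIV (G k)" for k using C[of k] unfolding C1c_def by blast
  have phiM: "\<phi> k \<in> borel_measurable (lebesgue_on T)" if "T \<in> sets lebesgue" for k T
    using continuous_imp_measurable_on_sets_lebesgue[OF continuous_on_subset[OF phic] that] by auto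
  have GM: "G k \<in> borel_measurable (lebesgue_on B)" for k
    using continuous_imp_measurable_on_sets_lebesgue[OF continuous_on_subset[OF Gc] Bl] by auto
  obtain Mp where Mp: "\<And>k x. \<bar>\<phi> k x\<bar> \<le> Mp k" using C1c_props(3)[OF C] by metis
  obtain MG where MG: "\<And>k x. norm (G k x) \<le> MG k" using C1c_props(1)[OF C] by metis
  have ind: "integrable (lebesgue_on B) (\<lambda>x. indicator S x * h x)" if "integrable (lebesgue_on B) h" for h :: "'a \<Rightarrow> real"
    using integrable_mult_indicator[OF SB that] by simp
  have vI: "integrable (lebesgue_on B) (\<lambda>x. (v x)\<^sup>2 * \<nu> x)"
  proof -
    have "(\<lambda>x. (v x)\<^sup>2 * \<nu> x) absolutely_integrable_on B"
      by (rule ai_nonneg[OF vi]) (use nnL in \<open>auto elim: eventually_mono\<close>)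
    then show ?thesis using Bl by (simp add: ai_iff)
  qed
  have DvI: "integrable (lebesgue_on B) (\<lambda>x. (norm (Dv x))\<^sup>2 * \<omega> x)"
  proof -
    have "(\<lambda>x. (norm (Dv x))\<^sup>2 * \<omega> x) absolutely_integrable_on B"
      by (rule ai_nonneg[OF Dvi]) (use wwL in \<open>auto elim: eventually_mono\<close>)
    then show ?thesis using Bl by (simp add: ai_iff)
  qed
  have pI: "integrable (lebesgue_on B) (\<lambda>x. (\<phi> k x)\<^sup>2 * \<nu> x)" for k
  proof (rule Bochner_Integration.integrable_bound[where f="\<lambda>x. (Mp k)\<^sup>2 * \<nu> x"])
    show "integrable (lebesgue_on B) (\<lambda>x. (Mp k)\<^sup>2 * \<nu> x)" using nI by simp
    show "(\<lambda>x. (\<phi> k x)\<^sup>2 * \<nu> x) \<in> borel_measurable (lebesgue_on B)" using phiM[OF Bl] nm by measurable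
    show "AE x in lebesgue_on B. norm ((\<phi> k x)\<^sup>2 * \<nu> x) \<le> norm ((Mp k)\<^sup>2 * \<nu> x)"
      using nn
    proof eventually_elim
      case (elim x)
      have "(\<phi> k x)\<^sup>2 \<le> (Mp k)\<^sup>2" using power_mono[OF Mp[of k x] abs_ge_zero, of 2] by simp
      then show ?case using elim by (simp add: abs_mult mult_right_mono)
    qed
  qed
  have GI: "integrable (lebesgue_on B) (\<lambda>x. (norm (G k x))\<^sup>2 * \<omega> x)" for k
  proof (rule Bochner_Integration.integrable_bound[where f="\<lambda>x. (MG k)\<^sup>2 * \<omega> x"])
    show "integrable (lebesgue_on B) (\<lambda>x. (MG k)\<^sup>2 * \<omega> x)" using wI by simp
    show "(\<lambda>x. (norm (G k x))\<^sup>2 * \<omega> x) \<in> borel_measurable (lebesgue_on B)" using GM wm by measurable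
    show "AE x in lebesgue_on B. norm ((norm (G k x))\<^sup>2 * \<omega> x) \<le> norm ((MG k)\<^sup>2 * \<omega> x)"
      using wwn
    proof eventually_elim
      case (elim x)
      have "(norm (G k x))\<^sup>2 \<le> (MG k)\<^sup>2" using MG[of k x] by (simp add: power_mono)
      then show ?case using elim by (simp add: abs_mult mult_right_mono)
    qed
  qed
  have pvI: "integrable (lebesgue_on B) (\<lambda>x. (\<phi> k x - v x)\<^sup>2 * \<nu> x)" for k
  proof (rule Bochner_Integration.integrable_bound[where f="\<lambda>x. 2 * ((\<phi> k x)\<^sup>2 * \<nu> x) + 2 * ((v x)\<^sup>2 * \<nu> x)"])
    show "integrable (lebesgue_on B) (\<lambda>x. 2 * ((\<phi> k x)\<^sup>2 * \<nu> x) + 2 * ((v x)\<^sup>2 * \<nu> x))" using pI vI by simp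
    show "(\<lambda>x. (\<phi> k x - v x)\<^sup>2 * \<nu> x) \<in> borel_measurable (lebesgue_on B)" using phiM[OF Bl] vM nm by measurable
    show "AE x in lebesgue_on B. norm ((\<phi> k x - v x)\<^sup>2 * \<nu> x) \<le> norm (2 * ((\<phi> k x)\<^sup>2 * \<nu> x) + 2 * ((v x)\<^sup>2 * \<nu> x))"
      using nn
    proof eventually_elim
      case (elim x)
      have "(\<phi> k x - v x)\<^sup>2 \<le> 2 * (\<phi> k x)\<^sup>2 + 2 * (v x)\<^sup>2"
        using zero_le_power2[of "\<phi> k x + v x"] unfolding power2_diff power2_sum by linarith
      then have "(\<phi> k x - v x)\<^sup>2 * \<nu> x \<le> (2 * (\<phi> k x)\<^sup>2 + 2 * (v x)\<^sup>2) * \<nu> x"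
        using elim by (rule mult_right_mono)
      then show ?case using elim by (simp add: abs_mult algebra_simps)
    qed
  qed
  have GDI: "integrable (lebesgue_on B) (\<lambda>x. (norm (G k x - Dv x))\<^sup>2 * \<omega> x)" for k
  proof (rule Bochner_Integration.integrable_bound[where f="\<lambda>x. 2 * ((norm (G k x))\<^sup>2 * \<omega> x) + 2 * ((norm (Dv x))\<^sup>2 * \<omega> x)"])
    show "integrable (lebesgue_on B) (\<lambda>x. 2 * ((norm (G k x))\<^sup>2 * \<omega> x) + 2 * ((norm (Dv x))\<^sup>2 * \<omega> x))" using GI DvI by simp
    show "(\<lambda>x. (norm (G k x - Dv x))\<^sup>2 * \<omega> x) \<in> borel_measurable (lebesgue_on B)" using GM DvM wm by measurable
    show "AE x in lebesgue_on B. norm ((norm (G k x - Dv x))\<^sup>2 * \<omega> x) \<le> norm (2 * ((norm (G k x))\<^sup>2 * \<omega> x) + 2 * ((norm (Dv x))\<^sup>2 * \<omega> x))"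
      using wwn
    proof eventually_elim
      case (elim x)
      have t: "norm (G k x - Dv x) \<le> norm (G k x) + norm (Dv x)" by (rule norm_triangle_ineq4)
      have "(norm (G k x - Dv x))\<^sup>2 \<le> (norm (G k x) + norm (Dv x))\<^sup>2"
        using t by (simp add: power_mono)
      also have "\<dots> \<le> 2 * (norm (G k x))\<^sup>2 + 2 * (norm (Dv x))\<^sup>2"
        using zero_le_power2[of "norm (G k x) - norm (Dv x)"] unfolding power2_diff power2_sum by linarith
      finally have "(norm (G k x - Dv x))\<^sup>2 * \<omega> x \<le> (2 * (norm (G k x))\<^sup>2 + 2 * (norm (Dv x))\<^sup>2) * \<omega> x"
        using elim by (rule mult_right_mono)
      then show ?case using elim by (simp add: abs_mult algebra_simps)
    qed
  qed
  have eqI: "(\<integral>x. indicator S x * h x \<partial>lebesgue_on B) = integral S h" if "integrable (lebesgue_on B) h" for h :: "'a \<Rightarrow> real"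
    using integral_on_B_eq[OF ind[OF that] Bl] integral_ind_eq[OF S(2)] by simp
  have L1': "(\<lambda>k. \<integral>x. (\<phi> k x - v x)\<^sup>2 * \<nu> x \<partial>lebesgue_on B) \<longlonglongrightarrow> 0"
    using L1 by (simp add: integral_on_B_eq[OF pvI Bl])
  have L2': "(\<lambda>k. \<integral>x. (norm (G k x - Dv x))\<^sup>2 * \<omega> x \<partial>lebesgue_on B) \<longlonglongrightarrow> 0"
    using L2 by (simp add: integral_on_B_eq[OF GDI Bl])
  have cN: "(\<lambda>k. integral S (\<lambda>x. (\<phi> k x)\<^sup>2 * \<nu> x)) \<longlonglongrightarrow> integral S (\<lambda>x. (v x)\<^sup>2 * \<nu> x)"
  proof -
    have "(\<lambda>k. \<integral>x. (norm (\<phi> k x))\<^sup>2 * (indicator S x * \<nu> x) \<partial>lebesgue_on B)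
        \<longlonglongrightarrow> (\<integral>x. (norm (v x))\<^sup>2 * (indicator S x * \<nu> x) \<partial>lebesgue_on B)"
    proof (rule L2conv)
      show "AE x in lebesgue_on B. 0 \<le> indicator S x * \<nu> x" using nn by eventually_elim simp
      show "integrable (lebesgue_on B) (\<lambda>x. (norm (v x))\<^sup>2 * (indicator S x * \<nu> x))"
        using ind[OF vI] by (simp add: mult_ac)
      show "integrable (lebesgue_on B) (\<lambda>x. (norm (\<phi> k x - v x))\<^sup>2 * (indicator S x * \<nu> x))" for k
        using ind[OF pvI] by (simp add: mult_ac)
      show "integrable (lebesgue_on B) (\<lambda>x. (norm (\<phi> k x))\<^sup>2 * (indicator S x * \<nu> x))" for k
        using ind[OF pI] by (simp add: mult_ac)
      show "(\<lambda>k. \<integral>x. (norm (\<phi> k x - v x))\<^sup>2 * (indicator S x * \<nu> x) \<partial>lebesgue_on B) \<longlonglongrightarrow> 0"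
      proof (rule tendsto_sandwich[OF _ _ tendsto_const L1'])
        show "\<forall>\<^sub>F k in sequentially. 0 \<le> (\<integral>x. (norm (\<phi> k x - v x))\<^sup>2 * (indicator S x * \<nu> x) \<partial>lebesgue_on B)"
        proof (intro always_eventually allI)
          fix k
          have "AE x in lebesgue_on B. 0 \<le> (norm (\<phi> k x - v x))\<^sup>2 * (indicator S x * \<nu> x)"
            using nn by eventually_elim simp
          then show "0 \<le> (\<integral>x. (norm (\<phi> k x - v x))\<^sup>2 * (indicator S x * \<nu> x) \<partial>lebesgue_on B)"
            by (rule integral_nonneg_AE)
        qed
        show "\<forall>\<^sub>F k in sequentially. (\<integral>x. (norm (\<phi> k x - v x))\<^sup>2 * (indicator S x * \<nu> x) \<partial>lebesgue_on B)
              \<le> (\<integral>x. (\<phi> k x - v x)\<^sup>2 * \<nu> x \<partial>lebesgue_on B)"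
        proof (intro always_eventually allI)
          fix k
          have i1: "integrable (lebesgue_on B) (\<lambda>x. (norm (\<phi> k x - v x))\<^sup>2 * (indicator S x * \<nu> x))"
            using ind[OF pvI] by (simp add: mult_ac)
          have ae: "AE x in lebesgue_on B. (norm (\<phi> k x - v x))\<^sup>2 * (indicator S x * \<nu> x) \<le> (\<phi> k x - v x)\<^sup>2 * \<nu> x"
            using nn by eventually_elim (auto simp: indicator_def)
          show "(\<integral>x. (norm (\<phi> k x - v x))\<^sup>2 * (indicator S x * \<nu> x) \<partial>lebesgue_on B)
              \<le> (\<integral>x. (\<phi> k x - v x)\<^sup>2 * \<nu> x \<partial>lebesgue_on B)"
            by (rule integral_mono_AE[OF i1 pvI ae])
        qed
      qed
    qed
    moreover have "(\<integral>x. (norm (\<phi> k x))\<^sup>2 * (indicator S x * \<nu> x) \<partial>lebesgue_on B) = integral S (\<lambda>x. (\<phi> k x)\<^sup>2 * \<nu> x)" for k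
      using eqI[OF pI[of k]] by (simp add: mult_ac)
    moreover have "(\<integral>x. (norm (v x))\<^sup>2 * (indicator S x * \<nu> x) \<partial>lebesgue_on B) = integral S (\<lambda>x. (v x)\<^sup>2 * \<nu> x)"
      using eqI[OF vI] by (simp add: mult_ac)
    ultimately show ?thesis by simp
  qed
  have cD: "(\<lambda>k. integral B (\<lambda>x. (norm (G k x))\<^sup>2 * \<omega> x)) \<longlonglongrightarrow> integral B (\<lambda>x. (norm (Dv x))\<^sup>2 * \<omega> x)"
  proof -
    have "(\<lambda>k. \<integral>x. (norm (G k x))\<^sup>2 * \<omega> x \<partial>lebesgue_on B) \<longlonglongrightarrow> (\<integral>x. (norm (Dv x))\<^sup>2 * \<omega> x \<partial>lebesgue_on B)"
      by (rule L2conv[OF wwn DvI GDI GI L2'])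
    then show ?thesis by (simp add: integral_on_B_eq[OF GI Bl] integral_on_B_eq[OF DvI Bl])
  qed
  obtain r where r: "strict_mono r" "AE x in lebesgue_on B. (\<lambda>n. (\<phi> (r n) x - v x)\<^sup>2 * \<nu> x) \<longlonglongrightarrow> 0"
  proof -
    have "(\<lambda>n. \<integral>x. norm ((\<phi> n x - v x)\<^sup>2 * \<nu> x) \<partial>lebesgue_on B) = (\<lambda>n. \<integral>x. (\<phi> n x - v x)\<^sup>2 * \<nu> x \<partial>lebesgue_on B)"
    proof (intro ext integral_cong_AE)
      fix n
      show "(\<lambda>x. norm ((\<phi> n x - v x)\<^sup>2 * \<nu> x)) \<in> borel_measurable (lebesgue_on B)"
        by (rule measurable_compose[OF borel_measurable_integrable[OF pvI[of n]] borel_measurable_norm])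
      show "(\<lambda>x. (\<phi> n x - v x)\<^sup>2 * \<nu> x) \<in> borel_measurable (lebesgue_on B)"
        using borel_measurable_integrable[OF pvI[of n]] .
      show "AE x in lebesgue_on B. norm ((\<phi> n x - v x)\<^sup>2 * \<nu> x) = (\<phi> n x - v x)\<^sup>2 * \<nu> x"
        using nn by eventually_elim (simp add: abs_mult)
    qed
    with L1' have "(\<lambda>n. \<integral>x. norm ((\<phi> n x - v x)\<^sup>2 * \<nu> x) \<partial>lebesgue_on B) \<longlonglongrightarrow> 0" by simp
    from tendsto_L1_AE_subseq[of "lebesgue_on B" "\<lambda>n x. (\<phi> n x - v x)\<^sup>2 * \<nu> x", OF pvI this]
    obtain r0 where "strict_mono r0" "AE x in lebesgue_on B. (\<lambda>n. (\<phi> (r0 n) x - v x)\<^sup>2 * \<nu> x) \<longlonglongrightarrow> 0"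
      by blast
    then show ?thesis by (rule that)
  qed
  have conv: "AE x in lebesgue. x \<in> B \<longrightarrow> (\<lambda>n. \<phi> (r n) x) \<longlonglongrightarrow> v x"
  proof -
    have "AE x in lebesgue_on B. (\<lambda>n. \<phi> (r n) x) \<longlonglongrightarrow> v x"
      using r(2) ae_on[OF npL Bl]
    proof eventually_elim
      case (elim x)
      have "(\<lambda>n. (\<phi> (r n) x - v x)\<^sup>2 * \<nu> x * (1 / \<nu> x)) \<longlonglongrightarrow> 0 * (1 / \<nu> x)"
        by (rule tendsto_mult[OF elim(1) tendsto_const])
      then have "(\<lambda>n. (\<phi> (r n) x - v x)\<^sup>2) \<longlonglongrightarrow> 0" using elim(2) by simp
      then have "(\<lambda>n. sqrt ((\<phi> (r n) x - v x)\<^sup>2)) \<longlonglongrightarrow> sqrt 0" by (rule tendsto_real_sqrt)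
      then have "(\<lambda>n. \<bar>\<phi> (r n) x - v x\<bar>) \<longlonglongrightarrow> 0" by simp
      then have "(\<lambda>n. \<phi> (r n) x - v x) \<longlonglongrightarrow> 0" by (rule tendsto_rabs_zero_cancel)
      then show ?case by (rule LIM_zero_cancel)
    qed
    then show ?thesis using Bl by (subst (asm) AE_restrict_space_iff) auto
  qed
  define a where "a k = integral S (\<lambda>x. \<bar>\<phi> k x\<bar> powr (2 * \<kappa>) * \<upsilon> x)" for k
  define R where "R k = \<gamma>1\<^sup>2 * \<rho>\<^sup>2 * ((1 / wmeas \<nu> B) * integral S (\<lambda>x. (\<phi> k x)\<^sup>2 * \<nu> x)) powr (\<kappa> - 1) *
               ((1 / wmeas \<omega> B) * integral B (\<lambda>x. (norm (G k x))\<^sup>2 * \<omega> x))" for k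
  define Ri where "Ri = \<gamma>1\<^sup>2 * \<rho>\<^sup>2 * ((1 / wmeas \<nu> B) * integral S (\<lambda>x. (v x)\<^sup>2 * \<nu> x)) powr (\<kappa> - 1) *
           ((1 / wmeas \<omega> B) * integral B (\<lambda>x. (norm (Dv x))\<^sup>2 * \<omega> x))"
  have aR: "a k \<le> wmeas \<upsilon> B * R k" for k
  proof -
    have "(\<exists>C. C-lipschitz_on UNIV (\<phi> k))" using C1c_props(2)[OF C] .
    moreover have "closure {x. \<phi> k x \<noteq> 0} \<subseteq> B" using C[of k] by (simp add: C1c_def)
    moreover have "AE x in lebesgue. (\<phi> k has_derivative (\<lambda>h. G k x \<bullet> h)) (at x)"
      using C[of k] by (simp add: C1c_def)
    ultimately have prem: "S \<in> sets lebesgue \<and> S \<subseteq> B \<and> (\<exists>C. C-lipschitz_on UNIV (\<phi> k)) \<and>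
        closure {x. \<phi> k x \<noteq> 0} \<subseteq> B \<and> (AE x in lebesgue. (\<phi> k has_derivative (\<lambda>h. G k x \<bullet> h)) (at x))"
      using S by (intro conjI)
    have "(1 / wmeas \<upsilon> B) * a k \<le> R k"
      unfolding a_def R_def by (rule mp[OF hyp[THEN spec, THEN spec, THEN spec, of S "\<phi> k" "G k"] prem])
    then have "wmeas \<upsilon> B * ((1 / wmeas \<upsilon> B) * a k) \<le> wmeas \<upsilon> B * R k"
      using cu by (intro mult_left_mono) auto
    then show ?thesis using cu by simp
  qed
  have Rlim: "R \<longlonglongrightarrow> Ri"
  proof -
    have N0: "0 \<le> integral S (\<lambda>x. (\<phi> k x)\<^sup>2 * \<nu> x)" for k
      by (rule integral_nonneg_AE_h) (use nnL in \<open>auto elim: eventually_mono\<close>)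
    have t1: "(\<lambda>k. (1 / wmeas \<nu> B) * integral S (\<lambda>x. (\<phi> k x)\<^sup>2 * \<nu> x))
        \<longlonglongrightarrow> (1 / wmeas \<nu> B) * integral S (\<lambda>x. (v x)\<^sup>2 * \<nu> x)"
      by (rule tendsto_mult_left[OF cN])
    have t2: "(\<lambda>k. ((1 / wmeas \<nu> B) * integral S (\<lambda>x. (\<phi> k x)\<^sup>2 * \<nu> x)) powr (\<kappa> - 1))
        \<longlonglongrightarrow> ((1 / wmeas \<nu> B) * integral S (\<lambda>x. (v x)\<^sup>2 * \<nu> x)) powr (\<kappa> - 1)"
      by (rule tendsto_powr'[OF t1 tendsto_const]) (use kappa cn N0 in \<open>simp add: always_eventually\<close>)
    have t3: "(\<lambda>k. (1 / wmeas \<omega> B) * integral B (\<lambda>x. (norm (G k x))\<^sup>2 * \<omega> x))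
        \<longlonglongrightarrow> (1 / wmeas \<omega> B) * integral B (\<lambda>x. (norm (Dv x))\<^sup>2 * \<omega> x)"
      by (rule tendsto_mult_left[OF cD])
    show ?thesis unfolding R_def Ri_def
      by (intro tendsto_mult t2 t3 tendsto_const)
  qed
  have uiS: "\<upsilon> absolutely_integrable_on S" by (rule set_integrable_subset[OF ui S(1) S(2)])
  have uMS: "\<upsilon> \<in> borel_measurable (lebesgue_on S)" using uiS S(1) by (simp add: absolutely_integrable_measurable)
  have hM: "(\<lambda>x. \<bar>\<phi> k x\<bar> powr (2 * \<kappa>) * \<upsilon> x) \<in> borel_measurable (lebesgue_on S)" for k
    using phiM[OF S(1)] uMS by measurable
  have hint: "(\<lambda>x. \<bar>\<phi> k x\<bar> powr (2 * \<kappa>) * \<upsilon> x) integrable_on S" for k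
  proof -
    have "(\<lambda>x. \<bar>\<phi> k x\<bar> powr (2 * \<kappa>) * \<upsilon> x) absolutely_integrable_on S"
    proof (rule absolutely_integrable_bounded_measurable_product[where h="(*)", OF bilinear_times _ S(1) _ uiS])
      show "(\<lambda>x. \<bar>\<phi> k x\<bar> powr (2 * \<kappa>)) \<in> borel_measurable (lebesgue_on S)"
        using phiM[OF S(1)] by measurable
      have "\<forall>y\<in>(\<lambda>x. \<bar>\<phi> k x\<bar> powr (2 * \<kappa>)) ` S. norm y \<le> \<bar>Mp k\<bar> powr (2 * \<kappa>)"
      proof
        fix y assume "y \<in> (\<lambda>x. \<bar>\<phi> k x\<bar> powr (2 * \<kappa>)) ` S"
        then obtain x where y: "y = \<bar>\<phi> k x\<bar> powr (2 * \<kappa>)" by blast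
        have "\<bar>\<phi> k x\<bar> \<le> \<bar>Mp k\<bar>" using Mp[of k x] by linarith
        then have "\<bar>\<phi> k x\<bar> powr (2 * \<kappa>) \<le> \<bar>Mp k\<bar> powr (2 * \<kappa>)"
          using kappa by (intro powr_mono2) auto
        then show "norm y \<le> \<bar>Mp k\<bar> powr (2 * \<kappa>)" using y by simp
      qed
      then show "bounded ((\<lambda>x. \<bar>\<phi> k x\<bar> powr (2 * \<kappa>)) ` S)" unfolding bounded_iff by blast
    qed
    then show ?thesis using absolutely_integrable_on_def by blast
  qed
  have Ueq: "(\<integral>\<^sup>+x. ennreal (indicator S x * (\<bar>\<phi> k x\<bar> powr (2 * \<kappa>) * \<upsilon> x)) \<partial>lebesgue) = ennreal (a k)" for k
    unfolding a_def by (rule nn_henstock[OF hint S(1)]) (use uuL in \<open>auto elim: eventually_mono\<close>)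
  have "(\<integral>\<^sup>+x. ennreal (indicator S x * (\<bar>v x\<bar> powr (2 * \<kappa>) * \<upsilon> x)) \<partial>lebesgue)
      = (\<integral>\<^sup>+x. liminf (\<lambda>n. ennreal (indicator S x * (\<bar>\<phi> (r n) x\<bar> powr (2 * \<kappa>) * \<upsilon> x))) \<partial>lebesgue)"
  proof (rule nn_integral_cong_AE)
    show "AE x in lebesgue. ennreal (indicator S x * (\<bar>v x\<bar> powr (2 * \<kappa>) * \<upsilon> x))
        = liminf (\<lambda>n. ennreal (indicator S x * (\<bar>\<phi> (r n) x\<bar> powr (2 * \<kappa>) * \<upsilon> x)))"
      using conv
    proof eventually_elim
      case (elim x)
      show ?case
      proof (cases "x \<in> S")
        case True
        then have cx: "(\<lambda>n. \<phi> (r n) x) \<longlonglongrightarrow> v x" using elim S(2) by auto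
        have "(\<lambda>n. \<bar>\<phi> (r n) x\<bar> powr (2 * \<kappa>)) \<longlonglongrightarrow> \<bar>v x\<bar> powr (2 * \<kappa>)"
          by (rule tendsto_powr'[OF tendsto_rabs[OF cx] tendsto_const]) (use kappa in auto)
        then have "(\<lambda>n. ennreal (indicator S x * (\<bar>\<phi> (r n) x\<bar> powr (2 * \<kappa>) * \<upsilon> x)))
            \<longlonglongrightarrow> ennreal (indicator S x * (\<bar>v x\<bar> powr (2 * \<kappa>) * \<upsilon> x))"
          by (intro tendsto_ennrealI tendsto_mult tendsto_const)
        then show ?thesis using lim_imp_Liminf[OF sequentially_bot] by metis
      next
        case False
        then show ?thesis by (simp add: Liminf_const[OF sequentially_bot])
      qed
    qed
  qed
  also have "\<dots> \<le> liminf (\<lambda>n. (\<integral>\<^sup>+x. ennreal (indicator S x * (\<bar>\<phi> (r n) x\<bar> powr (2 * \<kappa>) * \<upsilon> x)) \<partial>lebesgue))"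
    by (rule nn_integral_liminf) (rule meas_ind[OF hM S(1)])
  also have "\<dots> = liminf (\<lambda>n. ennreal (a (r n)))" by (simp add: Ueq)
  also have "\<dots> \<le> liminf (\<lambda>n. ennreal (wmeas \<upsilon> B * R (r n)))"
    by (intro Liminf_mono always_eventually allI ennreal_leI aR)
  also have "\<dots> = ennreal (wmeas \<upsilon> B * Ri)"
  proof -
    have "(\<lambda>n. R (r n)) \<longlonglongrightarrow> Ri" using LIMSEQ_subseq_LIMSEQ[OF Rlim r(1)] by (simp add: comp_def)
    then have "(\<lambda>n. ennreal (wmeas \<upsilon> B * R (r n))) \<longlonglongrightarrow> ennreal (wmeas \<upsilon> B * Ri)"
      by (intro tendsto_ennrealI tendsto_mult_left)
    then show ?thesis using lim_imp_Liminf[OF sequentially_bot] by metis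
  qed
  finally show ?thesis unfolding Ri_def .
qed

lemma L2conv_F:
  fixes f :: "'i \<Rightarrow> 'x \<Rightarrow> 'b::real_normed_vector"
  assumes w: "AE x in M. 0 \<le> w x"
    and ig: "integrable M (\<lambda>x. (norm (g x))\<^sup>2 * w x)"
    and idf: "\<forall>\<^sub>F k in F. integrable M (\<lambda>x. (norm (f k x - g x))\<^sup>2 * w x)"
    and iff: "\<forall>\<^sub>F k in F. integrable M (\<lambda>x. (norm (f k x))\<^sup>2 * w x)"
    and lim: "((\<lambda>k. \<integral>x. (norm (f k x - g x))\<^sup>2 * w x \<partial>M) \<longlongrightarrow> 0) F"
  shows "((\<lambda>k. \<integral>x. (norm (f k x))\<^sup>2 * w x \<partial>M) \<longlongrightarrow> (\<integral>x. (norm (g x))\<^sup>2 * w x \<partial>M)) F"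
proof (rule tendstoI)
  fix e :: real assume e: "0 < e"
  define Cg where "Cg = (\<integral>x. (norm (g x))\<^sup>2 * w x \<partial>M)"
  have Cg: "0 \<le> Cg" unfolding Cg_def
    by (rule integral_nonneg_AE) (use w in \<open>auto\<close>)
  define d where "d = e / (2 * (Cg + 1))"
  have d: "0 < d" using e Cg by (simp add: d_def)
  have dC: "d * Cg < e / 2"
  proof -
    have "d * Cg = e * Cg / (2 * (Cg + 1))" by (simp add: d_def)
    also have "\<dots> < e / 2" using e Cg by (simp add: field_simps)
    finally show ?thesis .
  qed
  define e2 where "e2 = e / (2 * (1 + 1/d))"
  have e2: "0 < e2" using e d by (simp add: e2_def add_pos_pos)
  have ev: "\<forall>\<^sub>F k in F. dist (\<integral>x. (norm (f k x - g x))\<^sup>2 * w x \<partial>M) 0 < e2"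
    using tendstoD[OF lim e2] .
  show "\<forall>\<^sub>F k in F. dist (\<integral>x. (norm (f k x))\<^sup>2 * w x \<partial>M) (\<integral>x. (norm (g x))\<^sup>2 * w x \<partial>M) < e"
    using ev idf iff
  proof eventually_elim
    case (elim k)
    define D where "D = (\<integral>x. (norm (f k x - g x))\<^sup>2 * w x \<partial>M)"
    have D: "D < e2" using elim(1) by (simp add: D_def)
    have "dist (\<integral>x. (norm (f k x))\<^sup>2 * w x \<partial>M) (\<integral>x. (norm (g x))\<^sup>2 * w x \<partial>M)
        = \<bar>\<integral>x. (norm (f k x))\<^sup>2 * w x - (norm (g x))\<^sup>2 * w x \<partial>M\<bar>"
      using elim(3) ig by (simp add: dist_real_def)
    also have "\<dots> \<le> (\<integral>x. \<bar>(norm (f k x))\<^sup>2 * w x - (norm (g x))\<^sup>2 * w x\<bar> \<partial>M)"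
      by (rule integral_abs_bound)
    also have "\<dots> \<le> (\<integral>x. (1 + 1/d) * ((norm (f k x - g x))\<^sup>2 * w x) + d * ((norm (g x))\<^sup>2 * w x) \<partial>M)"
    proof (rule integral_mono_AE)
      show "AE x in M. \<bar>(norm (f k x))\<^sup>2 * w x - (norm (g x))\<^sup>2 * w x\<bar> \<le> (1 + 1/d) * ((norm (f k x - g x))\<^sup>2 * w x) + d * ((norm (g x))\<^sup>2 * w x)"
        using w by eventually_elim (rule sq_diff_bound[OF d])
    qed (use elim ig in auto)
    also have "\<dots> = (1 + 1/d) * D + d * Cg"
      using elim(2) ig by (simp add: D_def Cg_def)
    also have "\<dots> < e"
    proof -
      have "(1 + 1/d) * D < (1 + 1/d) * e2"
        using D d by (intro mult_strict_left_mono) (auto intro: add_pos_pos)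
      also have "\<dots> = e / 2"
      proof -
        have "0 < 1/d" using d by simp
        then have p: "(1 + 1/d) \<noteq> 0" by linarith
        show ?thesis unfolding e2_def using p by (simp add: field_simps)
      qed
      finally have "(1 + 1/d) * D < e / 2" .
      then show ?thesis using dC by linarith
    qed
    finally show ?case .
  qed
qed

lemma tonelli_leb:
  fixes f :: "'a::euclidean_space \<times> real \<Rightarrow> ennreal"
  assumes f: "f \<in> borel_measurable lebesgue"
  shows "integral\<^sup>N lebesgue f = (\<integral>\<^sup>+t. (\<integral>\<^sup>+x. f (x, t) \<partial>lebesgue) \<partial>lborel)"
proof -
  obtain g where g: "g \<in> borel_measurable lborel" "AE z in lborel. f z = g z"
    using completion_ex_borel_measurable[of f lborel] f by auto
  obtain N where N: "N \<in> sets lborel" "emeasure lborel N = 0" "\<And>z. z \<notin> N \<Longrightarrow> f z = g z"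
    using g(2) by (auto elim!: AE_E) (metis (mono_tags, lifting) mem_Collect_eq subsetD)
  have gp: "g \<in> borel_measurable (lborel \<Otimes>\<^sub>M lborel)" using g(1) by (simp add: lborel_prod)
  have "integral\<^sup>N lebesgue f = integral\<^sup>N lborel f" by (simp add: nn_integral_completion)
  also have "\<dots> = integral\<^sup>N lborel g" by (rule nn_integral_cong_AE[OF g(2)])
  also have "\<dots> = integral\<^sup>N (lborel \<Otimes>\<^sub>M lborel) g" by (simp add: lborel_prod)
  also have "\<dots> = (\<integral>\<^sup>+t. (\<integral>\<^sup>+x. g (x, t) \<partial>lborel) \<partial>lborel)"
    by (rule lborel_pair.nn_integral_snd[OF gp, symmetric])
  also have "\<dots> = (\<integral>\<^sup>+t. (\<integral>\<^sup>+x. f (x, t) \<partial>lebesgue) \<partial>lborel)"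
  proof (rule nn_integral_cong_AE)
    have Nm: "N \<in> sets (lborel \<Otimes>\<^sub>M lborel)" by (subst lborel_prod) (rule N(1))
    have "N \<in> null_sets (lborel \<Otimes>\<^sub>M lborel)" by (subst lborel_prod) (use N in \<open>simp add: null_sets_def\<close>)
    then have "AE z in lborel \<Otimes>\<^sub>M lborel. z \<notin> N" by (rule AE_not_in)
    moreover have meas: "{z \<in> space (lborel \<Otimes>\<^sub>M lborel). (fst z, snd z) \<notin> N} \<in> sets (lborel \<Otimes>\<^sub>M lborel)"
    proof -
      have "{z \<in> space (lborel \<Otimes>\<^sub>M lborel). (fst z, snd z) \<notin> N} = space (lborel \<Otimes>\<^sub>M lborel) - N" by auto
      then show ?thesis using sets.compl_sets[OF Nm] by (simp only:)
    qed
    ultimately have "AE x in lborel. AE t in lborel. (x, t) \<notin> N"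
      using lborel_pair.AE_pair_iff[OF meas] by simp
    then have "AE t in lborel. AE x in lborel. (x, t) \<notin> N"
      using lborel_pair.AE_commute[OF meas] by simp
    then show "AE t in lborel. (\<integral>\<^sup>+x. g (x, t) \<partial>lborel) = (\<integral>\<^sup>+x. f (x, t) \<partial>lebesgue)"
    proof eventually_elim
      case (elim t)
      have "(\<integral>\<^sup>+x. g (x, t) \<partial>lborel) = (\<integral>\<^sup>+x. g (x, t) \<partial>lebesgue)" by (simp add: nn_integral_completion)
      also have "\<dots> = (\<integral>\<^sup>+x. f (x, t) \<partial>lebesgue)"
        by (rule nn_integral_cong_AE) (use AE_completion[OF elim] N(3) in \<open>auto elim: eventually_mono\<close>)
      finally show ?case .
    qed
  qed
  finally show ?thesis .
qed

lemma open_leb: "open (S :: 'b::euclidean_space set) \<Longrightarrow> S \<in> sets lebesgue"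
  by (metis borel_open sets_completionI_sets sets_lborel)

lemma L2_bounded:
  fixes u :: "'a::euclidean_space \<Rightarrow> real \<Rightarrow> real" and \<nu> :: "'a \<Rightarrow> real"
  assumes ps: "par_space s1 s2 (ball x0 \<rho>) \<nu> \<omega> u Du" and wn: "weight \<nu>" and rho: "0 < \<rho>"
  shows "\<exists>M. \<forall>t\<in>{s1..s2}. integral (ball x0 \<rho>) (\<lambda>x. (u x t)\<^sup>2 * \<nu> x) \<le> M"
proof -
  define B where "B = ball x0 \<rho>"
  have Bl: "B \<in> sets lebesgue" by (simp add: B_def)
  have ni: "\<nu> absolutely_integrable_on B" using wmeas_pos[OF wn rho] by (auto simp: B_def)
  have nm: "\<nu> \<in> borel_measurable (lebesgue_on B)" using ni Bl by (simp add: absolutely_integrable_measurable)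
  have nnL: "AE x in lebesgue. 0 \<le> \<nu> x" using wn unfolding weight_def by (auto elim: eventually_mono)
  have nn: "AE x in lebesgue_on B. 0 \<le> \<nu> x" using ae_on[OF nnL Bl] .
  have L2: "\<And>t. t \<in> {s1..s2} \<Longrightarrow> (\<lambda>x. u x t) measurable_on B \<and> (\<lambda>x. (u x t)\<^sup>2 * \<nu> x) integrable_on B"
    using ps unfolding par_space_def L2w_def B_def by auto
  have lim: "\<And>t. t \<in> {s1..s2} \<Longrightarrow> ((\<lambda>s. integral B (\<lambda>x. (u x s - u x t)\<^sup>2 * \<nu> x)) \<longlongrightarrow> 0) (at t within {s1..s2})"
    using ps unfolding par_space_def B_def by auto
  have uM: "(\<lambda>x. u x t) \<in> borel_measurable (lebesgue_on B)" if "t \<in> {s1..s2}" for t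
    using L2[OF that] Bl by (simp add: measurable_on_iff_borel_measurable)
  have uI: "integrable (lebesgue_on B) (\<lambda>x. (u x t)\<^sup>2 * \<nu> x)" if "t \<in> {s1..s2}" for t
  proof -
    have "(\<lambda>x. (u x t)\<^sup>2 * \<nu> x) absolutely_integrable_on B"
      by (rule ai_nonneg) (use L2[OF that] nnL in \<open>auto elim: eventually_mono\<close>)
    then show ?thesis using Bl by (simp add: ai_iff)
  qed
  have udI: "integrable (lebesgue_on B) (\<lambda>x. (u x s - u x t)\<^sup>2 * \<nu> x)" if "s \<in> {s1..s2}" "t \<in> {s1..s2}" for s t
  proof (rule Bochner_Integration.integrable_bound[where f="\<lambda>x. 2 * ((u x s)\<^sup>2 * \<nu> x) + 2 * ((u x t)\<^sup>2 * \<nu> x)"])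
    show "integrable (lebesgue_on B) (\<lambda>x. 2 * ((u x s)\<^sup>2 * \<nu> x) + 2 * ((u x t)\<^sup>2 * \<nu> x))" using uI that by simp
    show "(\<lambda>x. (u x s - u x t)\<^sup>2 * \<nu> x) \<in> borel_measurable (lebesgue_on B)" using uM[OF that(1)] uM[OF that(2)] nm by measurable
    show "AE x in lebesgue_on B. norm ((u x s - u x t)\<^sup>2 * \<nu> x) \<le> norm (2 * ((u x s)\<^sup>2 * \<nu> x) + 2 * ((u x t)\<^sup>2 * \<nu> x))"
      using nn
    proof eventually_elim
      case (elim x)
      have "(u x s - u x t)\<^sup>2 \<le> 2 * (u x s)\<^sup>2 + 2 * (u x t)\<^sup>2"
        using zero_le_power2[of "u x s + u x t"] unfolding power2_diff power2_sum by linarith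
      then have "(u x s - u x t)\<^sup>2 * \<nu> x \<le> (2 * (u x s)\<^sup>2 + 2 * (u x t)\<^sup>2) * \<nu> x"
        using elim by (rule mult_right_mono)
      then show ?case using elim by (simp add: abs_mult algebra_simps)
    qed
  qed
  define Ms where "Ms s = (\<integral>x. (u x s)\<^sup>2 * \<nu> x \<partial>lebesgue_on B)" for s
  have ev: "\<forall>\<^sub>F s in at t within {s1..s2}. s \<in> {s1..s2}" for t
    by (auto simp: eventually_at_filter)
  have cont: "continuous_on {s1..s2} Ms"
    unfolding continuous_on_def
  proof
    fix t assume t: "t \<in> {s1..s2}"
    have "((\<lambda>s. \<integral>x. (norm (u x s))\<^sup>2 * \<nu> x \<partial>lebesgue_on B) \<longlongrightarrow> (\<integral>x. (norm (u x t))\<^sup>2 * \<nu> x \<partial>lebesgue_on B)) (at t within {s1..s2})"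
    proof (rule L2conv_F[where f="\<lambda>s x. u x s" and g="\<lambda>x. u x t"])
      show "AE x in lebesgue_on B. 0 \<le> \<nu> x" by (rule nn)
      show "integrable (lebesgue_on B) (\<lambda>x. (norm (u x t))\<^sup>2 * \<nu> x)" using uI[OF t] by simp
      show "\<forall>\<^sub>F s in at t within {s1..s2}. integrable (lebesgue_on B) (\<lambda>x. (norm (u x s - u x t))\<^sup>2 * \<nu> x)"
        using ev by eventually_elim (use udI t in simp)
      show "\<forall>\<^sub>F s in at t within {s1..s2}. integrable (lebesgue_on B) (\<lambda>x. (norm (u x s))\<^sup>2 * \<nu> x)"
        using ev by eventually_elim (use uI in simp)
      have "\<forall>\<^sub>F s in at t within {s1..s2}. integral B (\<lambda>x. (u x s - u x t)\<^sup>2 * \<nu> x) = (\<integral>x. (norm (u x s - u x t))\<^sup>2 * \<nu> x \<partial>lebesgue_on B)"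
        using ev
      proof eventually_elim
        case (elim s)
        show ?case using integral_on_B_eq[OF udI[OF elim t] Bl] by simp
      qed
      from tendsto_cong[OF this] lim[OF t]
      show "((\<lambda>s. \<integral>x. (norm (u x s - u x t))\<^sup>2 * \<nu> x \<partial>lebesgue_on B) \<longlongrightarrow> 0) (at t within {s1..s2})" by simp
    qed
    then show "(Ms \<longlongrightarrow> Ms t) (at t within {s1..s2})" by (simp add: Ms_def[abs_def])
  qed
  have "compact (Ms ` {s1..s2})" by (rule compact_continuous_image[OF cont compact_Icc])
  then obtain M where M: "\<And>y. y \<in> Ms ` {s1..s2} \<Longrightarrow> norm y \<le> M"
    using compact_imp_bounded bounded_iff by metis
  have "integral B (\<lambda>x. (u x t)\<^sup>2 * \<nu> x) \<le> M" if "t \<in> {s1..s2}" for t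
  proof -
    have "integral B (\<lambda>x. (u x t)\<^sup>2 * \<nu> x) = Ms t" unfolding Ms_def by (rule integral_on_B_eq[OF uI[OF that] Bl, symmetric])
    also have "\<dots> \<le> M" using M[of "Ms t"] that by auto
    finally show ?thesis .
  qed
  then show ?thesis unfolding B_def by blast
qed

theorem mainTheorem2:
  fixes x0 :: "'a::euclidean_space"
    and \<rho> K1 K2 q \<sigma>1 \<kappa> \<gamma>1 T s1 s2 :: real
    and \<nu> \<omega> :: "'a \<Rightarrow> real"
    and A :: "real \<Rightarrow> 'a set" and E :: "('a \<times> real) set"
    and u :: "'a \<Rightarrow> real \<Rightarrow> real" and Du :: "'a \<Rightarrow> real \<Rightarrow> 'a"
  assumes rho: "0 < \<rho>"
    and omega_A2: "A2 K1 \<omega>"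
    and B12q: "B12q q K2 \<nu> \<omega>" and q: "2 < q"
    and nu_Ainf: "A_infty \<nu>"
    and sigma1: "1 < \<sigma>1" "\<sigma>1 < q"
    and kappa: "1 < \<kappa>" "\<kappa> \<le> \<sigma>1"
    and interpolation:
      "\<forall>\<upsilon>\<in>{\<nu>, \<omega>}. \<forall>S f G.
         S \<in> sets lebesgue \<and> S \<subseteq> ball x0 \<rho> \<and>
         (\<exists>C. C-lipschitz_on UNIV f) \<and> closure {x. f x \<noteq> 0} \<subseteq> ball x0 \<rho> \<and>
         (AE x in lebesgue. (f has_derivative (\<lambda>h. G x \<bullet> h)) (at x))
         \<longrightarrow> (1 / wmeas \<upsilon> (ball x0 \<rho>)) * integral S (\<lambda>x. \<bar>f x\<bar> powr (2 * \<kappa>) * \<upsilon> x)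
             \<le> \<gamma>1\<^sup>2 * \<rho>\<^sup>2 *
               ((1 / wmeas \<nu> (ball x0 \<rho>)) * integral S (\<lambda>x. (f x)\<^sup>2 * \<nu> x)) powr (\<kappa> - 1) *
               ((1 / wmeas \<omega> (ball x0 \<rho>)) * integral (ball x0 \<rho>) (\<lambda>x. (norm (G x))\<^sup>2 * \<omega> x))"
    and times: "0 < T" "0 < s1" "s1 < s2" "s2 < T"
    and A_open: "\<forall>t\<in>{s1<..<s2}. open (A t)"
    and E_def: "E = {(x, t). t \<in> {s1<..<s2} \<and> x \<in> A t}"
    and E_open: "open E" and E_sub: "E \<subseteq> ball x0 \<rho> \<times> {s1<..<s2}"
    and u: "par_space s1 s2 (ball x0 \<rho>) \<nu> \<omega> u Du"
  shows "\<forall>\<upsilon>\<in>{\<nu>, \<omega>}.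
      (\<lambda>(x, t). \<bar>u x t\<bar> powr (2 * \<kappa>) * \<upsilon> x) integrable_on E \<and>
      (1 / wmeas \<upsilon> (ball x0 \<rho>)) * integral E (\<lambda>(x, t). \<bar>u x t\<bar> powr (2 * \<kappa>) * \<upsilon> x)
      \<le> \<gamma>1\<^sup>2 * \<rho>\<^sup>2 * (1 / wmeas \<nu> (ball x0 \<rho>)) powr (\<kappa> - 1) *
         (SUP t\<in>{s1<..<s2}. integral (A t) (\<lambda>x. (u x t)\<^sup>2 * \<nu> x)) powr (\<kappa> - 1) *
         ((1 / wmeas \<omega> (ball x0 \<rho>)) *
            integral (ball x0 \<rho> \<times> {s1<..<s2}) (\<lambda>(x, t). (norm (Du x t))\<^sup>2 * \<omega> x))"
proof -
  have wn: "weight \<nu>" and ww: "weight \<omega>" using B12q by (auto simp: B12q_def)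
  define B where "B = ball x0 \<rho>"
  define I where "I = {s1<..<s2}"
  have Bl: "B \<in> sets lebesgue" by (simp add: B_def)
  have cn: "0 < wmeas \<nu> B" and ni: "\<nu> absolutely_integrable_on B" using wmeas_pos[OF wn rho] by (auto simp: B_def)
  have cw: "0 < wmeas \<omega> B" and wi: "\<omega> absolutely_integrable_on B" using wmeas_pos[OF ww rho] by (auto simp: B_def)
  have nnL: "AE x in lebesgue. 0 \<le> \<nu> x" and wwL: "AE x in lebesgue. 0 \<le> \<omega> x"
    using wn ww unfolding weight_def by (auto elim: eventually_mono)
  have L2all: "\<And>t. t \<in> {s1..s2} \<Longrightarrow> (\<lambda>x. u x t) measurable_on B \<and> (\<lambda>x. (u x t)\<^sup>2 * \<nu> x) integrable_on B"
    using u unfolding par_space_def L2w_def B_def by auto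
  have Wae: "AE t in lebesgue. t \<in> I \<longrightarrow> W120 B \<nu> \<omega> (\<lambda>x. u x t) (\<lambda>x. Du x t)"
    using u unfolding par_space_def B_def I_def by auto
  have um: "(\<lambda>(x, t). u x t) measurable_on (B \<times> I)" and Dum: "(\<lambda>(x, t). Du x t) measurable_on (B \<times> I)"
    and Dui: "(\<lambda>(x, t). (norm (Du x t))\<^sup>2 * \<omega> x) integrable_on (B \<times> I)"
    using u unfolding par_space_def B_def I_def by auto
  have AB: "A t \<subseteq> B" if "t \<in> I" for t using E_sub that unfolding E_def B_def I_def by auto
  have Al: "A t \<in> sets lebesgue" if "t \<in> I" for t using A_open that open_leb unfolding I_def by auto
  have Ine: "I \<noteq> {}" using times unfolding I_def by auto
  have Isub: "I \<subseteq> {s1..s2}" unfolding I_def by auto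
  define Ns where "Ns t = integral (A t) (\<lambda>x. (u x t)\<^sup>2 * \<nu> x)" for t
  define Y where "Y = (SUP t\<in>I. Ns t)"
  have Ns0: "0 \<le> Ns t" for t unfolding Ns_def
    by (rule integral_nonneg_AE_h) (use nnL in \<open>auto elim: eventually_mono\<close>)
  obtain Mb where Mb: "\<And>t. t \<in> {s1..s2} \<Longrightarrow> integral B (\<lambda>x. (u x t)\<^sup>2 * \<nu> x) \<le> Mb"
    using L2_bounded[OF u wn rho] unfolding B_def by blast
  have NsB: "Ns t \<le> integral B (\<lambda>x. (u x t)\<^sup>2 * \<nu> x)" if t: "t \<in> I" for t
  proof -
    have ai: "(\<lambda>x. (u x t)\<^sup>2 * \<nu> x) absolutely_integrable_on B"
      by (rule ai_nonneg) (use L2all[of t] t Isub nnL in \<open>auto elim: eventually_mono\<close>)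
    have aiA: "(\<lambda>x. (u x t)\<^sup>2 * \<nu> x) absolutely_integrable_on A t"
      by (rule set_integrable_subset[OF ai Al[OF t] AB[OF t]])
    have "ennreal (Ns t) = (\<integral>\<^sup>+x. ennreal (indicator (A t) x * ((u x t)\<^sup>2 * \<nu> x)) \<partial>lebesgue)"
      unfolding Ns_def by (rule nn_henstock[symmetric]) (use aiA Al[OF t] nnL absolutely_integrable_on_def in \<open>auto elim: eventually_mono\<close>)
    also have "\<dots> \<le> (\<integral>\<^sup>+x. ennreal (indicator B x * ((u x t)\<^sup>2 * \<nu> x)) \<partial>lebesgue)"
    proof (rule nn_integral_mono_AE)
      show "AE x in lebesgue. ennreal (indicator (A t) x * ((u x t)\<^sup>2 * \<nu> x)) \<le> ennreal (indicator B x * ((u x t)\<^sup>2 * \<nu> x))"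
        using nnL
      proof eventually_elim
        case (elim x)
        show ?case using AB[OF t] elim by (cases "x \<in> A t") (auto simp: indicator_def)
      qed
    qed
    also have "\<dots> = ennreal (integral B (\<lambda>x. (u x t)\<^sup>2 * \<nu> x))"
      by (rule nn_henstock) (use ai Bl nnL absolutely_integrable_on_def in \<open>auto elim: eventually_mono\<close>)
    finally show ?thesis
      by (rule ennreal_le_iff[THEN iffD1, rotated]) (rule integral_nonneg_AE_h, use nnL in \<open>auto elim: eventually_mono\<close>)
  qed
  have bdd: "bdd_above (Ns ` I)"
  proof (rule bdd_aboveI2)
    fix t assume t: "t \<in> I"
    show "Ns t \<le> Mb" using NsB[OF t] Mb[of t] t Isub by (meson order_trans subsetD)
  qed
  have NsY: "Ns t \<le> Y" if "t \<in> I" for t unfolding Y_def by (rule cSUP_upper[OF that bdd])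
  have Y0: "0 \<le> Y" using Ine NsY Ns0 by (meson all_not_in_conv order_trans)
  show ?thesis
  proof
    fix \<upsilon> assume hu: "\<upsilon> \<in> {\<nu>, \<omega>}"
    have wu: "weight \<upsilon>" using hu wn ww by auto
    have cu: "0 < wmeas \<upsilon> B" and ui: "\<upsilon> absolutely_integrable_on B" using wmeas_pos[OF wu rho] by (auto simp: B_def)
    have uuL: "AE x in lebesgue. 0 \<le> \<upsilon> x" using wu unfolding weight_def by (auto elim: eventually_mono)
    have hyp: "\<forall>S f G.
         S \<in> sets lebesgue \<and> S \<subseteq> ball x0 \<rho> \<and>
         (\<exists>C. C-lipschitz_on UNIV f) \<and> closure {x. f x \<noteq> 0} \<subseteq> ball x0 \<rho> \<and>
         (AE x in lebesgue. (f has_derivative (\<lambda>h. G x \<bullet> h)) (at x))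
         \<longrightarrow> (1 / wmeas \<upsilon> (ball x0 \<rho>)) * integral S (\<lambda>x. \<bar>f x\<bar> powr (2 * \<kappa>) * \<upsilon> x)
             \<le> \<gamma>1\<^sup>2 * \<rho>\<^sup>2 *
               ((1 / wmeas \<nu> (ball x0 \<rho>)) * integral S (\<lambda>x. (f x)\<^sup>2 * \<nu> x)) powr (\<kappa> - 1) *
               ((1 / wmeas \<omega> (ball x0 \<rho>)) * integral (ball x0 \<rho>) (\<lambda>x. (norm (G x))\<^sup>2 * \<omega> x))"
      by (rule bspec[OF interpolation hu])
    define Hs where "Hs t = integral B (\<lambda>x. (norm (Du x t))\<^sup>2 * \<omega> x)" for t
    have Hs0: "0 \<le> Hs t" for t unfolding Hs_def
      by (rule integral_nonneg_AE_h) (use wwL in \<open>auto elim: eventually_mono\<close>)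
    define C0 where "C0 = wmeas \<upsilon> B * (\<gamma>1\<^sup>2 * \<rho>\<^sup>2 * (1 / wmeas \<nu> B) powr (\<kappa> - 1) * Y powr (\<kappa> - 1) * (1 / wmeas \<omega> B))"
    have C00: "0 \<le> C0" unfolding C0_def using cu cn cw by simp
    have sl: "(\<integral>\<^sup>+x. ennreal (indicator (A t) x * (\<bar>u x t\<bar> powr (2 * \<kappa>) * \<upsilon> x)) \<partial>lebesgue) \<le> ennreal (C0 * Hs t)"
      if t: "t \<in> I" and W: "W120 B \<nu> \<omega> (\<lambda>x. u x t) (\<lambda>x. Du x t)" for t
    proof -
      have "(\<integral>\<^sup>+x. ennreal (indicator (A t) x * (\<bar>u x t\<bar> powr (2 * \<kappa>) * \<upsilon> x)) \<partial>lebesgue)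
          \<le> ennreal (wmeas \<upsilon> B * (\<gamma>1\<^sup>2 * \<rho>\<^sup>2 * ((1 / wmeas \<nu> B) * Ns t) powr (\<kappa> - 1) * ((1 / wmeas \<omega> B) * Hs t)))"
        using slice[OF rho kappa(1) wn ww wu hyp W[unfolded B_def] Al[OF t] AB[OF t, unfolded B_def]]
        unfolding B_def Ns_def Hs_def .
      also have "\<dots> \<le> ennreal (C0 * Hs t)"
      proof (rule ennreal_leI)
        define K where "K = wmeas \<upsilon> B * \<gamma>1\<^sup>2 * \<rho>\<^sup>2 * (1 / wmeas \<nu> B) powr (\<kappa> - 1) * (1 / wmeas \<omega> B) * Hs t"
        have K0: "0 \<le> K" unfolding K_def using cu cn cw Hs0[of t] by simp
        have "Ns t powr (\<kappa> - 1) \<le> Y powr (\<kappa> - 1)"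
          using NsY[OF t] Ns0[of t] kappa by (intro powr_mono2) auto
        then have "K * Ns t powr (\<kappa> - 1) \<le> K * Y powr (\<kappa> - 1)" using K0 by (rule mult_left_mono)
        moreover have "wmeas \<upsilon> B * (\<gamma>1\<^sup>2 * \<rho>\<^sup>2 * ((1 / wmeas \<nu> B) * Ns t) powr (\<kappa> - 1) * ((1 / wmeas \<omega> B) * Hs t))
            = K * Ns t powr (\<kappa> - 1)"
        proof -
          have pm: "((1 / wmeas \<nu> B) * Ns t) powr (\<kappa> - 1) = (1 / wmeas \<nu> B) powr (\<kappa> - 1) * Ns t powr (\<kappa> - 1)"
            by (rule powr_mult)
          show ?thesis unfolding K_def pm by (simp add: mult_ac)
        qed
        moreover have "C0 * Hs t = K * Y powr (\<kappa> - 1)" unfolding K_def C0_def by simp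
        ultimately show "wmeas \<upsilon> B * (\<gamma>1\<^sup>2 * \<rho>\<^sup>2 * ((1 / wmeas \<nu> B) * Ns t) powr (\<kappa> - 1) * ((1 / wmeas \<omega> B) * Hs t))
            \<le> C0 * Hs t" by simp
      qed
      finally show ?thesis .
    qed
    have BIo: "open (B \<times> I)" unfolding B_def I_def by (intro open_Times) auto
    have BIl: "B \<times> I \<in> sets lebesgue" by (rule open_leb[OF BIo])
    have El: "E \<in> sets lebesgue" by (rule open_leb[OF E_open])
    have EBI: "E \<subseteq> B \<times> I" using E_sub unfolding B_def I_def .
    define uBI where "uBI z = (if z \<in> B \<times> I then (case z of (x, t) \<Rightarrow> u x t) else 0)" for z
    define DBI where "DBI z = (if z \<in> B \<times> I then (case z of (x, t) \<Rightarrow> Du x t) else 0)" for z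
    define \<upsilon>B where "\<upsilon>B x = (if x \<in> B then \<upsilon> x else 0)" for x
    define \<omega>B where "\<omega>B x = (if x \<in> B then \<omega> x else 0)" for x
    have uBIm: "uBI \<in> borel_measurable lebesgue"
    proof -
      have "(\<lambda>(x, t). u x t) \<in> borel_measurable (lebesgue_on (B \<times> I))"
        using um BIl by (simp add: measurable_on_iff_borel_measurable)
      from borel_measurable_if_I[OF this BIl] show ?thesis by (simp add: uBI_def[abs_def])
    qed
    have DBIm: "DBI \<in> borel_measurable lebesgue"
    proof -
      have "(\<lambda>(x, t). Du x t) \<in> borel_measurable (lebesgue_on (B \<times> I))"
        using Dum BIl by (simp add: measurable_on_iff_borel_measurable)
      from borel_measurable_if_I[OF this BIl] show ?thesis by (simp add: DBI_def[abs_def])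
    qed
    have uBm: "(\<lambda>z. \<upsilon>B (fst z)) \<in> borel_measurable (lebesgue :: ('a \<times> real) measure)"
    proof (rule meas_fst)
      have "\<upsilon> \<in> borel_measurable (lebesgue_on B)" using ui Bl by (simp add: absolutely_integrable_measurable)
      from borel_measurable_if_I[OF this Bl] show "\<upsilon>B \<in> borel_measurable lebesgue" by (simp add: \<upsilon>B_def[abs_def])
    qed
    have wBm: "(\<lambda>z. \<omega>B (fst z)) \<in> borel_measurable (lebesgue :: ('a \<times> real) measure)"
    proof (rule meas_fst)
      have "\<omega> \<in> borel_measurable (lebesgue_on B)" using wi Bl by (simp add: absolutely_integrable_measurable)
      from borel_measurable_if_I[OF this Bl] show "\<omega>B \<in> borel_measurable lebesgue" by (simp add: \<omega>B_def[abs_def])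
    qed
    have indE: "indicator E \<in> borel_measurable (lebesgue :: ('a \<times> real) measure)"
      using El by simp
    have indBI: "indicator (B \<times> I) \<in> borel_measurable (lebesgue :: ('a \<times> real) measure)"
      using BIl by simp
    define fE where "fE = (\<lambda>(x, t). \<bar>u x t\<bar> powr (2 * \<kappa>) * \<upsilon> x)"
    define gD where "gD = (\<lambda>(x, t). (norm (Du x t))\<^sup>2 * \<omega> x)"
    define Fr where "Fr z = indicator E z * (\<bar>uBI z\<bar> powr (2 * \<kappa>) * \<upsilon>B (fst z))" for z
    define Dr where "Dr z = indicator (B \<times> I) z * (C0 * ((norm (DBI z))\<^sup>2 * \<omega>B (fst z)))" for z
    have Frm: "Fr \<in> borel_measurable lebesgue" unfolding Fr_def[abs_def]
      using indE uBIm uBm by measurable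
    have Drm: "Dr \<in> borel_measurable lebesgue" unfolding Dr_def[abs_def]
      using indBI DBIm wBm by measurable
    have FrE: "Fr z = indicator E z * fE z" for z
      using EBI by (cases z) (auto simp: Fr_def fE_def uBI_def \<upsilon>B_def indicator_def)
    have DrE: "Dr z = indicator (B \<times> I) z * (C0 * gD z)" for z
      by (cases z) (auto simp: Dr_def gD_def DBI_def \<omega>B_def indicator_def)
    have Wlb: "AE t in lborel. t \<in> I \<longrightarrow> W120 B \<nu> \<omega> (\<lambda>x. u x t) (\<lambda>x. Du x t)"
      using Wae by (simp add: AE_completion_iff)
    define J where "J = integral (B \<times> I) gD"
    have gDnn: "AE z in lebesgue. z \<in> B \<times> I \<longrightarrow> 0 \<le> C0 * gD z"
      using ae_fst[OF wwL] by eventually_elim (use C00 in \<open>auto simp: gD_def\<close>)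
    have J0: "0 \<le> J" unfolding J_def
      by (rule integral_nonneg_AE_h) (use ae_fst[OF wwL] in \<open>auto simp: gD_def elim!: eventually_mono\<close>)
    have Dui': "gD integrable_on (B \<times> I)" using Dui unfolding gD_def B_def I_def .
    have FrmE: "(\<lambda>z. ennreal (Fr z)) \<in> borel_measurable lebesgue" using Frm by measurable
    have DrmE: "(\<lambda>z. ennreal (Dr z)) \<in> borel_measurable lebesgue" using Drm by measurable
    have "(\<integral>\<^sup>+z. ennreal (indicator E z * fE z) \<partial>lebesgue) = (\<integral>\<^sup>+z. ennreal (Fr z) \<partial>lebesgue)"
      by (simp add: FrE)
    also have "\<dots> = (\<integral>\<^sup>+t. (\<integral>\<^sup>+x. ennreal (Fr (x, t)) \<partial>lebesgue) \<partial>lborel)"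
      by (rule tonelli_leb[OF FrmE])
    also have "\<dots> \<le> (\<integral>\<^sup>+t. (\<integral>\<^sup>+x. ennreal (Dr (x, t)) \<partial>lebesgue) \<partial>lborel)"
    proof (rule nn_integral_mono_AE)
      show "AE t in lborel. (\<integral>\<^sup>+x. ennreal (Fr (x, t)) \<partial>lebesgue) \<le> (\<integral>\<^sup>+x. ennreal (Dr (x, t)) \<partial>lebesgue)"
        using Wlb
      proof eventually_elim
        case (elim t)
        show ?case
        proof (cases "t \<in> I")
          case False
          then have "\<And>x. Fr (x, t) = 0" using EBI by (auto simp: FrE indicator_def)
          then show ?thesis by simp
        next
          case True
          then have W: "W120 B \<nu> \<omega> (\<lambda>x. u x t) (\<lambda>x. Du x t)" using elim by blast
          have Dvi: "(\<lambda>x. (norm (Du x t))\<^sup>2 * \<omega> x) integrable_on B"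
            using W unfolding W120_def W12_def by auto
          have "(\<integral>\<^sup>+x. ennreal (Fr (x, t)) \<partial>lebesgue) = (\<integral>\<^sup>+x. ennreal (indicator (A t) x * (\<bar>u x t\<bar> powr (2 * \<kappa>) * \<upsilon> x)) \<partial>lebesgue)"
            by (rule nn_integral_cong) (use True in \<open>simp add: FrE fE_def E_def indicator_def I_def\<close>)
          also have "\<dots> \<le> ennreal (C0 * Hs t)" by (rule sl[OF True W])
          also have "\<dots> = ennreal (integral B (\<lambda>x. C0 * ((norm (Du x t))\<^sup>2 * \<omega> x)))"
            by (simp add: Hs_def)
          also have "\<dots> = (\<integral>\<^sup>+x. ennreal (indicator B x * (C0 * ((norm (Du x t))\<^sup>2 * \<omega> x))) \<partial>lebesgue)"
          proof -
            have nnD: "AE x in lebesgue. x \<in> B \<longrightarrow> 0 \<le> C0 * ((norm (Du x t))\<^sup>2 * \<omega> x)"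
              using wwL by eventually_elim (use C00 in auto)
            have Dvi2: "(\<lambda>x. C0 * ((norm (Du x t))\<^sup>2 * \<omega> x)) integrable_on B"
              using integrable_on_cmult_left[OF Dvi, of C0] by simp
            show ?thesis by (rule nn_henstock[OF Dvi2 Bl nnD, symmetric])
          qed
          also have "\<dots> = (\<integral>\<^sup>+x. ennreal (Dr (x, t)) \<partial>lebesgue)"
            by (rule nn_integral_cong) (use True in \<open>simp add: DrE gD_def indicator_def\<close>)
          finally show ?thesis .
        qed
      qed
    qed
    also have "\<dots> = (\<integral>\<^sup>+z. ennreal (Dr z) \<partial>lebesgue)"
      by (rule tonelli_leb[OF DrmE, symmetric])
    also have "\<dots> = (\<integral>\<^sup>+z. ennreal (indicator (B \<times> I) z * (C0 * gD z)) \<partial>lebesgue)"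
      by (simp add: DrE)
    also have "\<dots> = ennreal (integral (B \<times> I) (\<lambda>z. C0 * gD z))"
    proof -
      have Dui2: "(\<lambda>z. C0 * gD z) integrable_on (B \<times> I)"
        using integrable_on_cmult_left[OF Dui', of C0] by simp
      show ?thesis by (rule nn_henstock[OF Dui2 BIl gDnn])
    qed
    also have "\<dots> = ennreal (C0 * J)" by (simp add: J_def)
    finally have main: "(\<integral>\<^sup>+z. ennreal (indicator E z * fE z) \<partial>lebesgue) \<le> ennreal (C0 * J)" .
    have nnE: "AE z in lebesgue. z \<in> E \<longrightarrow> 0 \<le> fE z"
      using ae_fst[OF uuL] by eventually_elim (auto simp: fE_def)
    have fEm: "fE \<in> borel_measurable (lebesgue_on E)"
    proof (rule borel_measurable_if_D)
      have "(\<lambda>z. if z \<in> E then fE z else 0) = Fr" by (auto simp: FrE fun_eq_iff indicator_def)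
      then show "(\<lambda>z. if z \<in> E then fE z else 0) \<in> borel_measurable lebesgue" using Frm by simp
    qed
    have fEint: "fE integrable_on E"
    proof (rule henstock_from_nn[OF fEm El nnE])
      show "(\<integral>\<^sup>+x. ennreal (indicator E x * fE x) \<partial>lebesgue) < \<infinity>"
        using le_less_trans[OF main ennreal_less_top] by simp
    qed
    have "ennreal (integral E fE) \<le> ennreal (C0 * J)"
      using nn_henstock[OF fEint El nnE] main by simp
    then have le: "integral E fE \<le> C0 * J" using C00 J0 by (simp add: ennreal_le_iff)
    show "(\<lambda>(x, t). \<bar>u x t\<bar> powr (2 * \<kappa>) * \<upsilon> x) integrable_on E \<and>
      (1 / wmeas \<upsilon> (ball x0 \<rho>)) * integral E (\<lambda>(x, t). \<bar>u x t\<bar> powr (2 * \<kappa>) * \<upsilon> x)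
      \<le> \<gamma>1\<^sup>2 * \<rho>\<^sup>2 * (1 / wmeas \<nu> (ball x0 \<rho>)) powr (\<kappa> - 1) *
         (SUP t\<in>{s1<..<s2}. integral (A t) (\<lambda>x. (u x t)\<^sup>2 * \<nu> x)) powr (\<kappa> - 1) *
         ((1 / wmeas \<omega> (ball x0 \<rho>)) *
            integral (ball x0 \<rho> \<times> {s1<..<s2}) (\<lambda>(x, t). (norm (Du x t))\<^sup>2 * \<omega> x))"
    proof
      show "(\<lambda>(x, t). \<bar>u x t\<bar> powr (2 * \<kappa>) * \<upsilon> x) integrable_on E" using fEint unfolding fE_def .
      have "(1 / wmeas \<upsilon> B) * integral E fE \<le> (1 / wmeas \<upsilon> B) * (C0 * J)"
        using le cu by (intro mult_left_mono) auto
      also have "\<dots> = \<gamma>1\<^sup>2 * \<rho>\<^sup>2 * (1 / wmeas \<nu> B) powr (\<kappa> - 1) * Y powr (\<kappa> - 1) * ((1 / wmeas \<omega> B) * J)"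
        unfolding C0_def using cu by simp
      finally show "(1 / wmeas \<upsilon> (ball x0 \<rho>)) * integral E (\<lambda>(x, t). \<bar>u x t\<bar> powr (2 * \<kappa>) * \<upsilon> x)
      \<le> \<gamma>1\<^sup>2 * \<rho>\<^sup>2 * (1 / wmeas \<nu> (ball x0 \<rho>)) powr (\<kappa> - 1) *
         (SUP t\<in>{s1<..<s2}. integral (A t) (\<lambda>x. (u x t)\<^sup>2 * \<nu> x)) powr (\<kappa> - 1) *
         ((1 / wmeas \<omega> (ball x0 \<rho>)) *
            integral (ball x0 \<rho> \<times> {s1<..<s2}) (\<lambda>(x, t). (norm (Du x t))\<^sup>2 * \<omega> x))"
        unfolding B_def I_def fE_def Y_def Ns_def[abs_def] J_def gD_def .
    qed
  qed
qed

end
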